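(* Let $F_1,\dots,F_n:\mathbb{R}^d\to\mathbb{R}^d$, $F=\frac1n\sum_iF_i$, and let $x^*$ satisfy $F(x^* )=0$. Assume $F$ is $L$-Lipschitz and satisfies the weak Minty condition with parameter $0<\rho<\frac1{2L}$. Let $v\sim\mathcal D$ and assume that for all $x\in\mathbb{R}^d$, $$\mathbb{E}\|F_v(x)\|^2\le\delta\|x-x^*\|^2+\|F(x)\|^2+2\sigma_*^2$$ for some $\delta,\sigma_*^2\ge0$. Let $\gamma_k=\gamma$, $\omega_k=\omega$ with $$\max\Big\{2\rho,\frac1{2L}\Big\}<\gamma<\frac1L,\qquad 0<\omega<\min\Big\{\gamma-2\rho,\frac1{4L}-\frac\gamma4\Big\},\qquad \delta\le\frac{(1-L\gamma)L^3\omega}{32}.$$ Then for all $K\ge2$ the iterates of SPEG satisfy $$\min_{0\le k\le K-1}\mathbb{E}\|F(\hat x_k)\|^2\le\frac{(1+8\omega\gamma(\delta+L^2)-L\gamma)\big(1+\frac{48\omega\gamma\delta}{(1-L\gamma)^2}\big)^{K-1}\|x_0-x^*\|^2}{\omega\gamma(1-L(\gamma+4\omega))(K-1)}+\frac{8\Big(8+\frac{(1-L\gamma)^2}{K-1}\big(1+\frac{48\omega\gamma\delta}{(1-L\gamma)^2}\big)^{K-1}\Big)\sigma_*^2}{(1-L\gamma)^2(1-L(\gamma+4\omega))}.$$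
   Context: $L$-Lipschitz: $\|F(x)-F(y)\|\le L\|x-y\|$. Weak Minty condition with parameter $\rho>0$: $\langle F(x),x-x^*\rangle\ge-\rho\|F(x)\|^2$ for all $x$. A sampling distribution $\mathcal D$ is a distribution of a random $v\in\mathbb{R}^n_+$ with $\mathbb{E}[v_i]=1$ for all $i$; $F_v(x):=\frac1n\sum_iv_iF_i(x)$. SPEG: given $x_0$, $\hat x_{-1}=x_0$, and for $k\ge0$: $\hat x_k=x_k-\gamma_kF_{v_{k-1}}(\hat x_{k-1})$, $x_{k+1}=x_k-\omega_kF_{v_k}(\hat x_k)$, with $v_{-1},v_0,v_1,\dots$ i.i.d. samples from $\mathcal D$. *)

theory Defs
  imports "HOL-Analysis.Analysis" "HOL-Probability.Probability"
begin

text \<open>Operators indexed by a finite type 'n (so n = CARD('n)); sampling vectors v :: real^'n.\<close>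

definition Favg :: "('n::finite \<Rightarrow> 'a::real_normed_vector \<Rightarrow> 'a) \<Rightarrow> 'a \<Rightarrow> 'a" where
  "Favg Fs x = (1 / real CARD('n)) *\<^sub>R (\<Sum>i\<in>UNIV. Fs i x)"

definition Fv :: "('n::finite \<Rightarrow> 'a::real_normed_vector \<Rightarrow> 'a) \<Rightarrow> real^'n \<Rightarrow> 'a \<Rightarrow> 'a" where
  "Fv Fs v x = (1 / real CARD('n)) *\<^sub>R (\<Sum>i\<in>UNIV. (v $ i) *\<^sub>R Fs i x)"

text \<open>SPEG iterates. The sample sequence vs is shifted: vs 0 = v_{-1}, vs (k+1) = v_k.
  speg Fs \<gamma> \<omega> x0 vs k = (x_k, xhat_k), with xhat_{-1} = x_0.\<close>

fun speg :: "('n::finite \<Rightarrow> 'a::real_normed_vector \<Rightarrow> 'a) \<Rightarrow> real \<Rightarrow> real \<Rightarrow> 'a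
              \<Rightarrow> (nat \<Rightarrow> real^'n) \<Rightarrow> nat \<Rightarrow> 'a \<times> 'a" where
  "speg Fs \<gamma> \<omega> x0 vs 0 = (x0, x0 - \<gamma> *\<^sub>R Fv Fs (vs 0) x0)"
| "speg Fs \<gamma> \<omega> x0 vs (Suc k) =
     (let (x, xh) = speg Fs \<gamma> \<omega> x0 vs k;
          x' = x - \<omega> *\<^sub>R Fv Fs (vs (Suc k)) xh
      in (x', x' - \<gamma> *\<^sub>R Fv Fs (vs (Suc k)) xh))"

definition speg_x :: "('n::finite \<Rightarrow> 'a::real_normed_vector \<Rightarrow> 'a) \<Rightarrow> real \<Rightarrow> real \<Rightarrow> 'a
              \<Rightarrow> (nat \<Rightarrow> real^'n) \<Rightarrow> nat \<Rightarrow> 'a" where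
  "speg_x Fs \<gamma> \<omega> x0 vs k = fst (speg Fs \<gamma> \<omega> x0 vs k)"

definition speg_xhat :: "('n::finite \<Rightarrow> 'a::real_normed_vector \<Rightarrow> 'a) \<Rightarrow> real \<Rightarrow> real \<Rightarrow> 'a
              \<Rightarrow> (nat \<Rightarrow> real^'n) \<Rightarrow> nat \<Rightarrow> 'a" where
  "speg_xhat Fs \<gamma> \<omega> x0 vs k = snd (speg Fs \<gamma> \<omega> x0 vs k)"

end

theory Submission
  imports Defs
begin


lemma vec_nth_meas[measurable]: "(\<lambda>v::real^'n. v $ i) \<in> borel_measurable borel" by measurable



lemma B2:
  fixes E Fn Gn H S X ip A Mb cc aa bb kf kv \<omega> \<gamma> \<rho> \<delta> \<sigma>sq q :: real
  assumes P1: "\<omega>*\<gamma> + A*q + 2*kf \<le> A"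
    and P2: "2*kf + (4/3)*Mb*\<delta>*\<gamma>\<^sup>2 + cc \<le> \<omega>*\<gamma>"
    and P3: "\<omega>\<^sup>2 + kv \<le> Mb"
    and P4: "aa = 1 + 4*Mb*\<delta>" "bb = 2*Mb*\<sigma>sq"
    and P5: "2*\<rho> + \<omega> \<le> \<gamma>" "\<omega> > 0" "A \<ge> 0" "kf \<ge> 0" "kv \<ge> 0" "\<delta> \<ge> 0"
    and nn: "E \<ge> 0" "Fn \<ge> 0" "Gn \<ge> 0" "H \<ge> 0" "X \<ge> 0"
    and hip: "ip \<ge> -\<rho>*Fn + \<gamma>*(Fn + Gn - H)/2"
    and hS: "S \<le> \<delta>*X + Fn + 2*\<sigma>sq" "S \<ge> Fn"
    and hX: "X \<le> 4*E + (4/3)*\<gamma>\<^sup>2*Gn"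
    and hF: "Fn \<le> 2*Gn + 2*H"
  shows "E - 2*\<omega>*ip + \<omega>\<^sup>2*S + A*q*H + kf*Fn + kv*(S - Fn) + cc*Gn \<le> aa*(E + A*H) + bb"
proof -
  have Mb0: "Mb \<ge> 0" using P3 P5 by (smt (verit) zero_le_power2)
  have aa1: "aa \<ge> 1" using P4 Mb0 P5 by simp
  have h1: "2*\<omega>*ip \<ge> 2*\<omega>*(-\<rho>*Fn + \<gamma>*(Fn+Gn-H)/2)" using hip P5 by (intro mult_left_mono) auto
  have h2: "(\<omega>\<^sup>2 + kv)*(S - Fn) \<le> Mb*(S - Fn)" using P3 hS by (intro mult_right_mono) auto
  have h3: "Mb*(S - Fn) \<le> Mb*(\<delta>*X + 2*\<sigma>sq)" using hS Mb0 by (intro mult_left_mono) auto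
  have h4: "(Mb*\<delta>)*X \<le> (Mb*\<delta>)*(4*E + (4/3)*\<gamma>\<^sup>2*Gn)" using hX Mb0 P5 by (intro mult_left_mono) auto
  have h5: "(\<omega>*(2*\<rho> + \<omega> - \<gamma>))*Fn \<le> 0" using P5 nn by (intro mult_nonpos_nonneg mult_nonneg_nonpos) auto
  have h6: "kf*Fn \<le> kf*(2*Gn + 2*H)" using hF P5 by (intro mult_left_mono) auto
  have h7: "(\<omega>*\<gamma> + A*q + 2*kf)*H \<le> A*H" using P1 nn by (intro mult_right_mono) auto
  have h7b: "A*H \<le> aa*(A*H)" proof -
    have "0 \<le> A*H" using P5 nn by simp
    from mult_right_mono[OF aa1 this] show ?thesis by simp
  qed
  have h8: "(2*kf + (4/3)*Mb*\<delta>*\<gamma>\<^sup>2 + cc)*Gn \<le> (\<omega>*\<gamma>)*Gn" using P2 nn by (intro mult_right_mono) auto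
  show ?thesis using h1 h2 h3 h4 h5 h6 h7 h7b h8 P4
    by (simp add: algebra_simps power2_eq_square)
qed


lemma conv_sq:
  fixes q p a B :: real
  assumes "q + p = 1" "p > 0" "q \<ge> 0"
  shows "(q*a + B)\<^sup>2 \<le> q*a\<^sup>2 + B\<^sup>2/p"
proof -
  have q: "q = 1 - p" using assms by simp
  have "p*(q*a\<^sup>2 + B\<^sup>2/p) - p*(q*a+B)\<^sup>2 = q*(p*a - B)\<^sup>2"
    using assms(2) unfolding q by (simp add: field_simps power2_eq_square)
  also have "\<dots> \<ge> 0" using assms by simp
  finally have "p*(q*a+B)\<^sup>2 \<le> p*(q*a\<^sup>2 + B\<^sup>2/p)" by simp
  then show ?thesis using assms(2) by simp
qed

lemma sq_sum2: "((a::real) + b)\<^sup>2 \<le> 2*a\<^sup>2 + 2*b\<^sup>2"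
proof -
  have "0 \<le> (a - b)\<^sup>2" by simp
  then show ?thesis by (simp add: power2_eq_square algebra_simps)
qed

lemma B1:
  fixes F :: "'a::real_normed_vector \<Rightarrow> 'a" and L \<gamma> \<omega> :: real
  assumes lip: "\<And>x y. norm (F x - F y) \<le> L * norm (x - y)"
    and L: "L > 0" and g0: "\<gamma> > 0" and w0: "\<omega> > 0"
    and p: "1 - L*\<gamma> > 0" and ql: "1 + L*\<gamma> + L*\<omega> \<le> 2"
  shows "(norm (F (x - \<omega> *\<^sub>R g' - \<gamma> *\<^sub>R g') - g'))\<^sup>2 \<le>
      (L*\<gamma>) * (norm (F (x - \<gamma> *\<^sub>R g) - g))\<^sup>2
      + (2*(L*\<omega>)\<^sup>2*(norm (F (x - \<gamma> *\<^sub>R g)))\<^sup>2 + 8*(norm (g' - F (x - \<gamma> *\<^sub>R g)))\<^sup>2) / (1 - L*\<gamma>)"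
proof -
  define xh where "xh = x - \<gamma> *\<^sub>R g"
  define f where "f = F xh"
  define h where "h = f - g"
  define \<xi> where "\<xi> = g' - f"
  define xh' where "xh' = x - \<omega> *\<^sub>R g' - \<gamma> *\<^sub>R g'"
  have d: "xh' - xh = - (\<omega> *\<^sub>R f + \<omega> *\<^sub>R \<xi> + \<gamma> *\<^sub>R \<xi> + \<gamma> *\<^sub>R h)"
    unfolding xh'_def xh_def h_def \<xi>_def by (simp add: algebra_simps)
  have nd: "norm (xh' - xh) \<le> \<omega> * norm f + \<omega> * norm \<xi> + \<gamma> * norm \<xi> + \<gamma> * norm h"
  proof -
    have "norm (xh' - xh) = norm (\<omega> *\<^sub>R f + \<omega> *\<^sub>R \<xi> + \<gamma> *\<^sub>R \<xi> + \<gamma> *\<^sub>R h)"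
      unfolding d by (rule norm_minus_cancel)
    also have "\<dots> \<le> norm (\<omega> *\<^sub>R f) + norm (\<omega> *\<^sub>R \<xi>) + norm (\<gamma> *\<^sub>R \<xi>) + norm (\<gamma> *\<^sub>R h)"
      by (intro norm_triangle_le add_mono order_refl)
    also have "\<dots> = \<omega> * norm f + \<omega> * norm \<xi> + \<gamma> * norm \<xi> + \<gamma> * norm h"
      using g0 w0 by simp
    finally show ?thesis .
  qed
  have hq: "F xh' - g' = (F xh' - F xh) - \<xi>" unfolding \<xi>_def f_def by simp
  have "norm (F xh' - g') \<le> norm (F xh' - F xh) + norm \<xi>" unfolding hq by (rule norm_triangle_ineq4)
  also have "\<dots> \<le> L * norm (xh' - xh) + norm \<xi>" using lip by simp
  also have "\<dots> \<le> L * (\<omega> * norm f + \<omega> * norm \<xi> + \<gamma> * norm \<xi> + \<gamma> * norm h) + norm \<xi>"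
    using nd L by simp
  also have "\<dots> = (L*\<gamma>) * norm h + ((L*\<omega>) * norm f + (1 + L*\<gamma> + L*\<omega>) * norm \<xi>)" by (simp add: algebra_simps)
  also have "\<dots> \<le> (L*\<gamma>) * norm h + ((L*\<omega>) * norm f + 2 * norm \<xi>)"
    using ql by (simp add: mult_right_mono)
  finally have n1: "norm (F xh' - g') \<le> (L*\<gamma>) * norm h + ((L*\<omega>) * norm f + 2 * norm \<xi>)" .
  have "(norm (F xh' - g'))\<^sup>2 \<le> ((L*\<gamma>) * norm h + ((L*\<omega>) * norm f + 2 * norm \<xi>))\<^sup>2"
    using n1 by (simp add: power_mono)
  also have "\<dots> \<le> (L*\<gamma>) * (norm h)\<^sup>2 + ((L*\<omega>) * norm f + 2 * norm \<xi>)\<^sup>2 / (1 - L*\<gamma>)"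
    using conv_sq[of "L*\<gamma>" "1 - L*\<gamma>"] p L g0 by simp
  also have "\<dots> \<le> (L*\<gamma>) * (norm h)\<^sup>2 + (2*(L*\<omega>)\<^sup>2*(norm f)\<^sup>2 + 8*(norm \<xi>)\<^sup>2) / (1 - L*\<gamma>)"
  proof -
    have "((L*\<omega>) * norm f + 2 * norm \<xi>)\<^sup>2 \<le> 2*((L*\<omega>) * norm f)\<^sup>2 + 2*(2 * norm \<xi>)\<^sup>2" by (rule sq_sum2)
    also have "\<dots> = 2*(L*\<omega>)\<^sup>2*(norm f)\<^sup>2 + 8*(norm \<xi>)\<^sup>2" by (simp add: power_mult_distrib)
    finally show ?thesis using p by (simp add: divide_right_mono)
  qed
  finally show ?thesis unfolding xh'_def h_def f_def \<xi>_def xh_def .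
qed


fun run :: "('s \<Rightarrow> 'v \<Rightarrow> 's) \<Rightarrow> 's \<Rightarrow> nat \<Rightarrow> 'v stream \<Rightarrow> 's" where
  "run T \<sigma> 0 s = \<sigma>"
| "run T \<sigma> (Suc k) s = T (run T \<sigma> k s) (s !! k)"

lemma run_Stream: "run T \<sigma> (Suc k) (v ## s) = run T (T \<sigma> v) k s"
  by (induction k) auto

lemma run_meas:
  assumes Tm: "(\<lambda>p. T (fst p) (snd p)) \<in> measurable (S \<Otimes>\<^sub>M M) S" and \<sigma>: "\<sigma> \<in> space S"
  shows "run T \<sigma> k \<in> measurable (stream_space M) S"
proof (induction k)
  case 0 then show ?case using \<sigma> by simp
next
  case (Suc k)
  have "(\<lambda>s. (run T \<sigma> k s, s !! k)) \<in> measurable (stream_space M) (S \<Otimes>\<^sub>M M)"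
    using Suc by (intro measurable_Pair) auto
  from measurable_comp[OF this Tm] show ?case by (simp add: comp_def)
qed

context prob_space
begin

lemma markov:
  fixes T :: "'s \<Rightarrow> 'a \<Rightarrow> 's" and \<Phi> G :: "'s \<Rightarrow> ennreal"
  assumes Tm: "(\<lambda>p. T (fst p) (snd p)) \<in> measurable (S \<Otimes>\<^sub>M M) S"
    and \<Phi>m: "\<Phi> \<in> borel_measurable S" and Gm: "G \<in> borel_measurable S"
    and step: "\<And>\<sigma>. \<sigma> \<in> space S \<Longrightarrow> (\<integral>\<^sup>+v. \<Phi> (T \<sigma> v) \<partial>M) + ennreal c * G \<sigma> \<le> ennreal a * \<Phi> \<sigma> + ennreal b"
    and a: "a > 0" and c: "c \<ge> 0" and b: "b \<ge> 0"
    and \<sigma>: "\<sigma> \<in> space S"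
  shows "(\<integral>\<^sup>+s. (\<Sum>k<K. ennreal ((1/a)^(Suc k) * c) * G (run T \<sigma> k s)) + ennreal ((1/a)^K) * \<Phi> (run T \<sigma> K s) \<partial>stream_space M)
     \<le> \<Phi> \<sigma> + ennreal (b * (\<Sum>k<K. (1/a)^(Suc k)))"
  using \<sigma>
proof (induction K arbitrary: \<sigma>)
  case 0
  interpret SS: prob_space "stream_space M" by (rule prob_space_stream_space)
  show ?case by (simp add: SS.emeasure_space_1)
next
  case (Suc K)
  interpret SS: prob_space "stream_space M" by (rule prob_space_stream_space)
  define r where "r = 1/a"
  have r0: "r > 0" unfolding r_def using a by simp
  have ra: "ennreal r * ennreal a = 1" unfolding r_def using a by (simp flip: ennreal_mult)
  define I where "I K \<sigma> s = (\<Sum>k<K. ennreal (r^(Suc k) * c) * G (run T \<sigma> k s)) + ennreal (r^K) * \<Phi> (run T \<sigma> K s)" for K \<sigma> s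
  have Im: "I K' \<sigma>' \<in> borel_measurable (stream_space M)" if "\<sigma>' \<in> space S" for K' \<sigma>'
  proof -
    have "(\<lambda>s. G (run T \<sigma>' k s)) \<in> borel_measurable (stream_space M)" for k
      using measurable_comp[OF run_meas[OF Tm that] Gm] by (simp add: comp_def)
    moreover have "(\<lambda>s. \<Phi> (run T \<sigma>' K' s)) \<in> borel_measurable (stream_space M)"
      using measurable_comp[OF run_meas[OF Tm that] \<Phi>m] by (simp add: comp_def)
    ultimately show ?thesis unfolding I_def by measurable
  qed
  have Tsp: "T \<sigma>' v \<in> space S" if "\<sigma>' \<in> space S" "v \<in> space M" for \<sigma>' v
    using measurable_space[OF Tm, of "(\<sigma>', v)"] that by (simp add: space_pair_measure)
  have PhiT: "(\<lambda>v. \<Phi> (T \<sigma>' v)) \<in> borel_measurable M" if "\<sigma>' \<in> space S" for \<sigma>'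
  proof -
    have "(\<lambda>v. (\<sigma>', v)) \<in> measurable M (S \<Otimes>\<^sub>M M)" using that by measurable
    from measurable_comp[OF measurable_comp[OF this Tm] \<Phi>m] show ?thesis by (simp add: comp_def)
  qed
  have key: "I (Suc K) \<sigma> (v ## s) = ennreal (r*c) * G \<sigma> + ennreal r * I K (T \<sigma> v) s" for v s
  proof -
    have e1: "ennreal (r^(Suc (Suc k)) * c) = ennreal r * ennreal (r^(Suc k) * c)" for k
      using r0 c by (simp add: ennreal_mult[symmetric] mult_ac)
    have e2: "ennreal (r^(Suc K)) = ennreal r * ennreal (r^K)"
      using r0 by (simp add: ennreal_mult[symmetric])
    have "I (Suc K) \<sigma> (v ## s) = ennreal (r*c) * G \<sigma> + (\<Sum>k<K. ennreal r * (ennreal (r^(Suc k) * c) * G (run T (T \<sigma> v) k s)))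
        + ennreal r * (ennreal (r^K) * \<Phi> (run T (T \<sigma> v) K s))"
      unfolding I_def sum.lessThan_Suc_shift run_Stream e1 e2 by (simp add: mult.assoc)
    also have "\<dots> = ennreal (r*c) * G \<sigma> + ennreal r * I K (T \<sigma> v) s"
      unfolding I_def by (simp add: sum_distrib_left distrib_left add.assoc)
    finally show ?thesis .
  qed
  have "(\<integral>\<^sup>+s. I (Suc K) \<sigma> s \<partial>stream_space M) = (\<integral>\<^sup>+v. (\<integral>\<^sup>+s. I (Suc K) \<sigma> (v ## s) \<partial>stream_space M) \<partial>M)"
    by (rule nn_integral_stream_space[OF Im[OF Suc.prems]])
  also have "\<dots> = (\<integral>\<^sup>+v. ennreal (r*c) * G \<sigma> + ennreal r * (\<integral>\<^sup>+s. I K (T \<sigma> v) s \<partial>stream_space M) \<partial>M)"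
  proof (rule nn_integral_cong)
    fix v assume v: "v \<in> space M"
    have "(\<integral>\<^sup>+s. I (Suc K) \<sigma> (v ## s) \<partial>stream_space M) = (\<integral>\<^sup>+s. ennreal (r*c) * G \<sigma> + ennreal r * I K (T \<sigma> v) s \<partial>stream_space M)"
      unfolding key ..
    also have "\<dots> = (\<integral>\<^sup>+s. ennreal (r*c) * G \<sigma> \<partial>stream_space M) + (\<integral>\<^sup>+s. ennreal r * I K (T \<sigma> v) s \<partial>stream_space M)"
      using Im[OF Tsp[OF Suc.prems v]] by (intro nn_integral_add) auto
    also have "\<dots> = ennreal (r*c) * G \<sigma> + ennreal r * (\<integral>\<^sup>+s. I K (T \<sigma> v) s \<partial>stream_space M)"
      using Im[OF Tsp[OF Suc.prems v]] by (simp add: nn_integral_cmult SS.emeasure_space_1)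
    finally show "(\<integral>\<^sup>+s. I (Suc K) \<sigma> (v ## s) \<partial>stream_space M) = ennreal (r*c) * G \<sigma> + ennreal r * (\<integral>\<^sup>+s. I K (T \<sigma> v) s \<partial>stream_space M)" .
  qed
  also have "\<dots> \<le> (\<integral>\<^sup>+v. ennreal (r*c) * G \<sigma> + ennreal r * (\<Phi> (T \<sigma> v) + ennreal (b * (\<Sum>k<K. r^(Suc k)))) \<partial>M)"
  proof (rule nn_integral_mono)
    fix v assume v: "v \<in> space M"
    have "(\<integral>\<^sup>+s. I K (T \<sigma> v) s \<partial>stream_space M) \<le> \<Phi> (T \<sigma> v) + ennreal (b * (\<Sum>k<K. r^(Suc k)))"
      using Suc.IH[OF Tsp[OF Suc.prems v]] unfolding I_def r_def .
    then show "ennreal (r*c) * G \<sigma> + ennreal r * (\<integral>\<^sup>+s. I K (T \<sigma> v) s \<partial>stream_space M)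
      \<le> ennreal (r*c) * G \<sigma> + ennreal r * (\<Phi> (T \<sigma> v) + ennreal (b * (\<Sum>k<K. r^(Suc k))))"
      by (intro add_left_mono mult_left_mono) auto
  qed
  also have "\<dots> = ennreal r * ((\<integral>\<^sup>+v. \<Phi> (T \<sigma> v) \<partial>M) + ennreal c * G \<sigma>) + ennreal r * ennreal (b * (\<Sum>k<K. r^(Suc k)))"
  proof -
    have "(\<integral>\<^sup>+v. ennreal (r*c) * G \<sigma> + ennreal r * (\<Phi> (T \<sigma> v) + ennreal (b * (\<Sum>k<K. r^(Suc k)))) \<partial>M)
      = (\<integral>\<^sup>+v. ennreal (r*c) * G \<sigma> + ennreal r * ennreal (b * (\<Sum>k<K. r^(Suc k))) + ennreal r * \<Phi> (T \<sigma> v) \<partial>M)"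
      by (intro nn_integral_cong) (simp add: distrib_left add_ac)
    also have "\<dots> = (\<integral>\<^sup>+v. ennreal (r*c) * G \<sigma> + ennreal r * ennreal (b * (\<Sum>k<K. r^(Suc k))) \<partial>M) + (\<integral>\<^sup>+v. ennreal r * \<Phi> (T \<sigma> v) \<partial>M)"
      using PhiT[OF Suc.prems] by (intro nn_integral_add) auto
    also have "\<dots> = ennreal (r*c) * G \<sigma> + ennreal r * ennreal (b * (\<Sum>k<K. r^(Suc k))) + ennreal r * (\<integral>\<^sup>+v. \<Phi> (T \<sigma> v) \<partial>M)"
      using PhiT[OF Suc.prems] by (simp add: nn_integral_cmult emeasure_space_1)
    also have "\<dots> = ennreal r * ((\<integral>\<^sup>+v. \<Phi> (T \<sigma> v) \<partial>M) + ennreal c * G \<sigma>) + ennreal r * ennreal (b * (\<Sum>k<K. r^(Suc k)))"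
      using r0 c by (simp add: ennreal_mult distrib_left mult.assoc add_ac)
    finally show ?thesis .
  qed
  also have "\<dots> \<le> ennreal r * (ennreal a * \<Phi> \<sigma> + ennreal b) + ennreal r * ennreal (b * (\<Sum>k<K. r^(Suc k)))"
    using step[OF Suc.prems] by (intro add_right_mono mult_left_mono) auto
  also have "\<dots> = \<Phi> \<sigma> + ennreal (b * (\<Sum>k<Suc K. r^(Suc k)))"
  proof -
    have "ennreal r * (ennreal a * \<Phi> \<sigma>) = \<Phi> \<sigma>" using ra by (simp flip: mult.assoc)
    moreover have "ennreal r * ennreal b + ennreal r * ennreal (b * (\<Sum>k<K. r^(Suc k))) = ennreal (b * (\<Sum>k<Suc K. r^(Suc k)))"
    proof -
      have "b * (\<Sum>k<Suc K. r^(Suc k)) = r * b + r * (b * (\<Sum>k<K. r^(Suc k)))"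
        unfolding sum.lessThan_Suc_shift by (simp add: sum_distrib_left algebra_simps)
      moreover have "0 \<le> b * (\<Sum>k<K. r^(Suc k))" using b r0 by (intro mult_nonneg_nonneg sum_nonneg) auto
      ultimately show ?thesis using r0 b by (simp add: ennreal_mult ennreal_plus)
    qed
    ultimately show ?thesis by (simp add: distrib_left add.assoc)
  qed
  finally show ?case unfolding I_def r_def .
qed

end

lemma ennreal_div_bound:
  fixes m :: ennreal
  assumes h: "ennreal c * m \<le> ennreal Z" and c: "c > 0"
  shows "m \<le> ennreal (Z / c)"
proof -
  have "m = ennreal (1/c) * (ennreal c * m)"
    using c by (simp add: mult.assoc[symmetric] ennreal_mult[symmetric])
  also have "\<dots> \<le> ennreal (1/c) * ennreal Z" using h by (intro mult_left_mono) auto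
  also have "\<dots> = ennreal (Z / c)" using ennreal_mult'[of "1/c" Z] c by simp
  finally show ?thesis .
qed

lemma sum_ennreal_mult:
  fixes m :: ennreal
  assumes "\<And>k. 0 \<le> w k" and "(\<Sum>k<K. w k) = S"
  shows "ennreal S * m = (\<Sum>k<K. ennreal (w k) * m)"
proof -
  have "(\<Sum>k<K. ennreal (w k)) = ennreal (\<Sum>k<K. w k)" using assms(1) by (intro sum_ennreal) auto
  moreover have "(\<Sum>k<K. ennreal (w k) * m) = (\<Sum>k<K. ennreal (w k)) * m" by (rule sum_distrib_right[symmetric])
  ultimately show ?thesis using assms(2) by simp
qed

lemma sum_mult_mono:
  fixes m :: ennreal
  assumes "\<And>k. k < K \<Longrightarrow> m \<le> f k"
  shows "(\<Sum>k<K. c k * m) \<le> (\<Sum>k<K. c k * f k)"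
  using assms by (intro sum_mono mult_left_mono) auto

locale SP = prob_space D for D :: "(real^'n::finite) measure" +
  fixes Fs :: "'n \<Rightarrow> 'a::euclidean_space \<Rightarrow> 'a"
    and xstar :: 'a and L \<rho> \<delta> \<sigma>sq \<gamma> \<omega> :: real
  assumes Fs_meas[measurable]: "\<And>i. Fs i \<in> borel_measurable borel"
    and sol: "Favg Fs xstar = 0"
    and L_pos: "L > 0"
    and lip: "\<And>x y. norm (Favg Fs x - Favg Fs y) \<le> L * norm (x - y)"
    and minty: "\<And>x. inner (Favg Fs x) (x - xstar) \<ge> - \<rho> * (norm (Favg Fs x))\<^sup>2"
    and D_sets: "sets D = sets borel"
    and D_nonneg: "AE v in D. \<forall>i. v $ i \<ge> 0"
    and D_mean: "\<And>i. (\<integral>\<^sup>+ v. ennreal (v $ i) \<partial>D) = 1"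
    and delta: "\<delta> \<ge> 0" and sigma: "\<sigma>sq \<ge> 0"
    and var: "\<And>x. (\<integral>\<^sup>+ v. ennreal ((norm (Fv Fs v x))\<^sup>2) \<partial>D)
                 \<le> ennreal (\<delta> * (norm (x - xstar))\<^sup>2 + (norm (Favg Fs x))\<^sup>2 + 2 * \<sigma>sq)"
    and rho: "0 < \<rho>" "\<rho> < 1 / (2 * L)"
    and gamma: "max (2 * \<rho>) (1 / (2 * L)) < \<gamma>" "\<gamma> < 1 / L"
    and omega: "0 < \<omega>" "\<omega> < min (\<gamma> - 2 * \<rho>) (1 / (4 * L) - \<gamma> / 4)"
    and delta_le: "\<delta> \<le> (1 - L * \<gamma>) * L ^ 3 * \<omega> / 32"
begin

lemma norm_add_sq: "(norm (z + a *\<^sub>R w))\<^sup>2 = (norm z)\<^sup>2 + 2 * a * (z \<bullet> w) + a\<^sup>2 * (norm w)\<^sup>2"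
proof -
  have "(norm (z + a *\<^sub>R w))\<^sup>2 = (z + a *\<^sub>R w) \<bullet> (z + a *\<^sub>R w)" by (simp only: power2_norm_eq_inner)
  also have "\<dots> = z \<bullet> z + 2 * a * (z \<bullet> w) + a\<^sup>2 * (w \<bullet> w)"
    by (simp add: inner_add_left inner_add_right inner_commute power2_eq_square algebra_simps)
  finally show ?thesis by (simp only: dot_square_norm)
qed

abbreviation "F \<equiv> Favg Fs"

lemma meas_D: "measurable D M = measurable borel M"
  by (rule measurable_cong_sets[OF D_sets refl])

lemma Fv_meas[measurable]: "(\<lambda>v. Fv Fs v y) \<in> borel_measurable D"
  unfolding meas_D Fv_def by measurable

lemma nth_integrable: "integrable D (\<lambda>v. v $ i)"
proof (rule integrableI_nonneg)
  show "(\<lambda>v. v $ i) \<in> borel_measurable D" unfolding meas_D by measurable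
  show "AE v in D. 0 \<le> v $ i" using D_nonneg by eventually_elim auto
  show "(\<integral>\<^sup>+ v. ennreal (v $ i) \<partial>D) < \<infinity>" using D_mean by simp
qed

lemma nth_integral: "(\<integral>v. v $ i \<partial>D) = 1"
proof -
  have "ennreal (\<integral>v. v $ i \<partial>D) = (\<integral>\<^sup>+ v. ennreal (v $ i) \<partial>D)"
    apply (rule nn_integral_eq_integral[symmetric, OF nth_integrable])
    using D_nonneg by eventually_elim auto
  then show ?thesis using D_mean by simp
qed

lemma Fv_integrable: "integrable D (\<lambda>v. Fv Fs v y)"
  unfolding Fv_def using nth_integrable by (intro integrable_scaleR_right integrable_sum integrable_scaleR_left) auto

lemma Fv_integral: "(\<integral>v. Fv Fs v y \<partial>D) = F y"
proof -
  have "(\<integral>v. Fv Fs v y \<partial>D) = (1 / real CARD('n)) *\<^sub>R (\<Sum>i\<in>UNIV. (\<integral>v. v $ i \<partial>D) *\<^sub>R Fs i y)"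
    unfolding Fv_def using nth_integrable
    by (simp add: integral_sum integrable_scaleR_left)
  then show ?thesis by (simp add: nth_integral Favg_def)
qed

lemma Fv_sq_meas[measurable]: "(\<lambda>v. (norm (Fv Fs v y))\<^sup>2) \<in> borel_measurable D"
  by measurable

lemma Fv_sq_integrable: "integrable D (\<lambda>v. (norm (Fv Fs v y))\<^sup>2)"
proof (rule integrableI_nonneg)
  show "(\<integral>\<^sup>+ v. ennreal ((norm (Fv Fs v y))\<^sup>2) \<partial>D) < \<infinity>"
    using var[of y] by (simp add: le_less_trans)
qed auto

definition "S2 y = (\<integral>v. (norm (Fv Fs v y))\<^sup>2 \<partial>D)"

lemma S2_nn: "(\<integral>\<^sup>+ v. ennreal ((norm (Fv Fs v y))\<^sup>2) \<partial>D) = ennreal (S2 y)"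
  unfolding S2_def by (rule nn_integral_eq_integral[OF Fv_sq_integrable]) auto

lemma S2_le: "S2 y \<le> \<delta> * (norm (y - xstar))\<^sup>2 + (norm (F y))\<^sup>2 + 2 * \<sigma>sq"
proof -
  have h: "ennreal (S2 y) \<le> ennreal (\<delta> * (norm (y - xstar))\<^sup>2 + (norm (F y))\<^sup>2 + 2 * \<sigma>sq)"
    using var[of y] S2_nn by metis
  show ?thesis by (rule ennreal_le_iff[THEN iffD1, OF _ h]) (use delta sigma in auto)
qed

lemma sq_expand_integrable: "integrable D (\<lambda>v. (norm (z + \<alpha> *\<^sub>R Fv Fs v y))\<^sup>2)"
proof -
  have eq: "(\<lambda>v. (norm (z + \<alpha> *\<^sub>R Fv Fs v y))\<^sup>2) = (\<lambda>v. (norm z)\<^sup>2 + 2 * \<alpha> * (z \<bullet> Fv Fs v y) + \<alpha>\<^sup>2 * (norm (Fv Fs v y))\<^sup>2)"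
    by (rule ext) (rule norm_add_sq)
  show ?thesis unfolding eq using Fv_integrable Fv_sq_integrable by auto
qed

lemma sq_expand_integral: "(\<integral>v. (norm (z + \<alpha> *\<^sub>R Fv Fs v y))\<^sup>2 \<partial>D) = (norm z)\<^sup>2 + 2 * \<alpha> * (z \<bullet> F y) + \<alpha>\<^sup>2 * S2 y"
proof -
  have eq: "(\<lambda>v. (norm (z + \<alpha> *\<^sub>R Fv Fs v y))\<^sup>2) = (\<lambda>v. (norm z)\<^sup>2 + 2 * \<alpha> * (z \<bullet> Fv Fs v y) + \<alpha>\<^sup>2 * (norm (Fv Fs v y))\<^sup>2)"
    by (rule ext) (rule norm_add_sq)
  show ?thesis unfolding eq S2_def using Fv_integrable Fv_sq_integrable
    by (simp add: Fv_integral prob_space)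
qed

lemma var_integral: "(\<integral>v. (norm (Fv Fs v y - F y))\<^sup>2 \<partial>D) = S2 y - (norm (F y))\<^sup>2"
  using sq_expand_integral[of "- F y" 1 y] by (simp add: power2_norm_eq_inner algebra_simps)

lemma var_integrable: "integrable D (\<lambda>v. (norm (Fv Fs v y - F y))\<^sup>2)"
  using sq_expand_integrable[of "- F y" 1 y] by (simp add: algebra_simps)

lemma S2_ge: "(norm (F y))\<^sup>2 \<le> S2 y"
proof -
  have "0 \<le> (\<integral>v. (norm (Fv Fs v y - F y))\<^sup>2 \<partial>D)" by simp
  then show ?thesis using var_integral by simp
qed


definition "p = 1 - L*\<gamma>"
definition "l = L*\<omega>"
definition "A = 4*\<omega>*\<gamma>/(3*p)"
definition "kf = 2*A*l\<^sup>2/p"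
definition "kv = 8*A/p"
definition "Mb = 11*\<omega>*\<gamma>/p\<^sup>2"
definition "aa = 1 + 4*Mb*\<delta>"
definition "bb = 2*Mb*\<sigma>sq"
definition "cc = \<omega>*\<gamma>*(p - 2*l)/p"

lemma g0: "\<gamma> > 0" using gamma L_pos by (smt (verit) divide_pos_pos max.strict_boundedE)
lemma w0: "\<omega> > 0" using omega by simp
lemma q_gt: "L*\<gamma> > 1/2"
proof -
  have "1/(2*L) < \<gamma>" using gamma by simp
  then show ?thesis using L_pos by (simp add: field_simps)
qed
lemma q_lt: "L*\<gamma> < 1" using gamma L_pos by (simp add: field_simps)
lemma p_pos: "p > 0" and p_half: "p < 1/2" using q_gt q_lt unfolding p_def by auto
lemma l_pos: "l > 0" unfolding l_def using L_pos w0 by simp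
lemma l_lt: "4*l < p"
proof -
  have "\<omega> < 1 / (4 * L) - \<gamma> / 4" using omega by simp
  then have "4*L*\<omega> < 4*L*(1 / (4 * L) - \<gamma> / 4)" using L_pos by simp
  also have "\<dots> = 1 - L*\<gamma>" using L_pos by (simp add: field_simps)
  finally show ?thesis unfolding l_def p_def by simp
qed
lemma rho_w: "2*\<rho> + \<omega> \<le> \<gamma>" using omega by simp
lemma delta_le': "\<delta> \<le> p*L^3*\<omega>/32" using delta_le unfolding p_def by simp
lemma sum_le2: "1 + L*\<gamma> + L*\<omega> \<le> 2" using l_lt p_half l_pos unfolding p_def l_def by simp
lemma A_nn: "A \<ge> 0" unfolding A_def using w0 g0 p_pos by simp
lemma kf_nn: "kf \<ge> 0" unfolding kf_def using A_nn p_pos by simp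
lemma kv_nn: "kv \<ge> 0" unfolding kv_def using A_nn p_pos by simp
lemma Mb_nn: "Mb \<ge> 0" unfolding Mb_def using w0 g0 p_pos by simp
lemma aa_ge: "aa \<ge> 1" unfolding aa_def using Mb_nn delta by simp
lemma bb_nn: "bb \<ge> 0" unfolding bb_def using Mb_nn sigma by simp
lemma cc_pos: "cc > 0" unfolding cc_def using w0 g0 p_pos l_lt l_pos by simp

lemma lp_le: "l/p \<le> 1/4" using l_lt p_pos by (simp add: field_simps)
lemma lp_nn: "l/p \<ge> 0" using l_pos p_pos by simp

lemma P1: "\<omega>*\<gamma> + A*(L*\<gamma>) + 2*kf \<le> A"
proof -
  have e1: "2*kf = (16/3)*(\<omega>*\<gamma>)*((l/p)\<^sup>2)" unfolding kf_def A_def using p_pos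
    by (simp add: field_simps power2_eq_square)
  have "(l/p)\<^sup>2 \<le> (1/4)\<^sup>2" using lp_le lp_nn by (intro power_mono) auto
  then have "2*kf \<le> (16/3)*(\<omega>*\<gamma>)*(1/16)" unfolding e1 using w0 g0
    by (intro mult_left_mono) (auto simp: power2_eq_square)
  moreover have "A*(L*\<gamma>) = A - A*p" unfolding p_def by (simp add: algebra_simps)
  moreover have "A*p = (4/3)*(\<omega>*\<gamma>)" unfolding A_def using p_pos by simp
  ultimately show ?thesis by simp
qed

lemma P2: "2*kf + (4/3)*Mb*\<delta>*\<gamma>\<^sup>2 + cc \<le> \<omega>*\<gamma>"
proof -
  define r where "r = l/p"
  define wg where "wg = \<omega>*\<gamma>"
  have wg0: "wg > 0" unfolding wg_def using w0 g0 by simp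
  have r0: "r \<ge> 0" "r \<le> 1/4" unfolding r_def using lp_nn lp_le by auto
  have e1: "2*kf = (16/3)*wg*(r*r)" unfolding kf_def A_def r_def wg_def using p_pos
    by (simp add: field_simps power2_eq_square)
  have "r*r \<le> (1/4)*r" using r0 by (intro mult_right_mono) auto
  then have t1: "wg*(r*r) \<le> wg*((1/4)*r)" using wg0 by (intro mult_left_mono) auto
  have t2: "wg*((1/4)*r) = (1/4)*(wg*r)" by simp
  have e1': "2*kf = (16/3)*(wg*(r*r))" using e1 by (simp add: mult.assoc)
  have k1: "2*kf \<le> (4/3)*(wg*r)" using e1' t1 t2 by linarith
  have dg: "\<delta>*\<gamma>\<^sup>2 \<le> p*l/32"
  proof -
    have "\<delta>*\<gamma>\<^sup>2 \<le> (p*L^3*\<omega>/32)*\<gamma>\<^sup>2" using delta_le' by (intro mult_right_mono) auto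
    also have "\<dots> = (p*l/32)*(L*\<gamma>)\<^sup>2" unfolding l_def by (simp add: power2_eq_square power3_eq_cube)
    also have "\<dots> \<le> (p*l/32)*1"
    proof (intro mult_left_mono)
      show "(L*\<gamma>)\<^sup>2 \<le> 1" using q_lt q_gt by (simp add: abs_square_le_1)
      show "0 \<le> p*l/32" using p_pos l_pos by simp
    qed
    finally show ?thesis by simp
  qed
  define Q where "Q = \<delta>*\<gamma>\<^sup>2/p\<^sup>2"
  have e2: "(4/3)*Mb*\<delta>*\<gamma>\<^sup>2 = (44/3)*(wg*Q)" unfolding Mb_def wg_def Q_def by simp
  have "Q \<le> (p*l/32)/p\<^sup>2" unfolding Q_def using dg p_pos by (intro divide_right_mono) auto
  also have "(p*l/32)/p\<^sup>2 = (1/32)*r" unfolding r_def using p_pos by (simp add: power2_eq_square)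
  finally have t3: "wg*Q \<le> wg*((1/32)*r)" using wg0 by (intro mult_left_mono) auto
  have t4: "wg*((1/32)*r) = (1/32)*(wg*r)" by simp
  have k2: "(4/3)*Mb*\<delta>*\<gamma>\<^sup>2 \<le> (44/3)*((1/32)*(wg*r))" using e2 t3 t4 by linarith
  have e3: "cc = wg - 2*(wg*r)" unfolding cc_def wg_def r_def using p_pos by (simp add: field_simps)
  have "0 \<le> wg*r" using wg0 r0 by simp
  then show ?thesis using k1 k2 e3 unfolding wg_def by linarith
qed

lemma P3: "\<omega>\<^sup>2 + kv \<le> Mb"
proof -
  have kv: "kv = (32/3)*(\<omega>*\<gamma>)/p\<^sup>2" unfolding kv_def A_def using p_pos by (simp add: field_simps power2_eq_square)
  have w1: "\<omega> < p/(4*L)" using l_lt L_pos unfolding l_def by (simp add: field_simps)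
  have g1: "1/(2*L) < \<gamma>" using gamma by simp
  have "p^3 \<le> (1/2)^3" using p_pos p_half by (intro power_mono) auto
  then have p3: "p^3 \<le> 1/8" by (simp add: power3_eq_cube)
  have "\<omega> * (3*p\<^sup>2) \<le> (p/(4*L))*(3*p\<^sup>2)" using w1 p_pos by (intro mult_right_mono) auto
  also have "\<dots> = (3/4)*p^3/L" using L_pos by (simp add: field_simps power2_eq_square power3_eq_cube)
  also have "\<dots> \<le> (3/4)*(1/8)/L" by (intro divide_right_mono mult_left_mono) (use p3 L_pos in auto)
  also have "\<dots> \<le> 1/(2*L)" using L_pos by (simp add: field_simps)
  also have "\<dots> \<le> \<gamma>" using g1 by simp
  finally have "\<omega> * (3*p\<^sup>2) \<le> \<gamma>" .
  then have "\<omega>*(\<omega> * (3*p\<^sup>2)) \<le> \<omega>*\<gamma>" using w0 by (intro mult_left_mono) auto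
  then have "\<omega>\<^sup>2 * (3*p\<^sup>2) \<le> \<omega>*\<gamma>" by (simp add: power2_eq_square mult.assoc)
  then have w2: "\<omega>\<^sup>2 \<le> (\<omega>*\<gamma>)/(3*p\<^sup>2)" using p_pos by (simp add: pos_le_divide_eq)
  define Z where "Z = (\<omega>*\<gamma>)/p\<^sup>2"
  have z1: "(\<omega>*\<gamma>)/(3*p\<^sup>2) = Z/3" unfolding Z_def by simp
  have z2: "kv = (32/3)*Z" unfolding kv Z_def by simp
  have z3: "Mb = 11*Z" unfolding Mb_def Z_def by simp
  show ?thesis using w2 z1 z2 z3 by linarith
qed

definition Tr :: "'a \<times> 'a \<Rightarrow> real^'n \<Rightarrow> 'a \<times> 'a" where
  "Tr \<sigma> v = (fst \<sigma> - \<omega> *\<^sub>R Fv Fs v (fst \<sigma> - \<gamma> *\<^sub>R snd \<sigma>), Fv Fs v (fst \<sigma> - \<gamma> *\<^sub>R snd \<sigma>))"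
definition Phi :: "'a \<times> 'a \<Rightarrow> real" where
  "Phi \<sigma> = (norm (fst \<sigma> - xstar))\<^sup>2 + A * (norm (F (fst \<sigma> - \<gamma> *\<^sub>R snd \<sigma>) - snd \<sigma>))\<^sup>2"

lemma Phi_nn: "Phi \<sigma> \<ge> 0" unfolding Phi_def using A_nn by simp

lemma F_bound: "norm (F y) \<le> L * norm (y - xstar)"
  using lip[of y xstar] sol by simp

lemma sq_43: "(norm (u + w :: 'a))\<^sup>2 \<le> 4*(norm u)\<^sup>2 + (4/3)*(norm w)\<^sup>2"
proof -
  have "norm (u + w) \<le> norm u + norm w" by (rule norm_triangle_ineq)
  then have "(norm (u + w))\<^sup>2 \<le> (norm u + norm w)\<^sup>2" by (simp add: power_mono)
  also have "\<dots> \<le> 4*(norm u)\<^sup>2 + (4/3)*(norm w)\<^sup>2"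
  proof -
    have "0 \<le> (3*norm u - norm w)\<^sup>2" by simp
    then show ?thesis by (simp add: power2_eq_square algebra_simps)
  qed
  finally show ?thesis .
qed

lemma sq_22: "(norm (u + w :: 'a))\<^sup>2 \<le> 2*(norm u)\<^sup>2 + 2*(norm w)\<^sup>2"
proof -
  have "norm (u + w) \<le> norm u + norm w" by (rule norm_triangle_ineq)
  then have "(norm (u + w))\<^sup>2 \<le> (norm u + norm w)\<^sup>2" by (simp add: power_mono)
  also have "\<dots> \<le> 2*(norm u)\<^sup>2 + 2*(norm w)\<^sup>2" by (rule sq_sum2)
  finally show ?thesis .
qed

lemma trans_step:
  "(\<integral>\<^sup>+v. ennreal (Phi (Tr (x,g) v)) \<partial>D) + ennreal (cc * (norm g)\<^sup>2) \<le> ennreal (aa * Phi (x,g) + bb)"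
proof -
  define xh where "xh = x - \<gamma> *\<^sub>R g"
  define f where "f = F xh"
  define e where "e = x - xstar"
  define Bd where "Bd v = (norm (e + (-\<omega>) *\<^sub>R Fv Fs v xh))\<^sup>2 + A*(L*\<gamma>)*(norm (f - g))\<^sup>2
      + kf*(norm f)\<^sup>2 + kv*(norm (Fv Fs v xh - f))\<^sup>2" for v
  have pw: "Phi (Tr (x,g) v) \<le> Bd v" for v
  proof -
    define g' where "g' = Fv Fs v xh"
    have b1: "(norm (F (x - \<omega> *\<^sub>R g' - \<gamma> *\<^sub>R g') - g'))\<^sup>2 \<le>
      (L*\<gamma>) * (norm (F (x - \<gamma> *\<^sub>R g) - g))\<^sup>2
      + (2*(L*\<omega>)\<^sup>2*(norm (F (x - \<gamma> *\<^sub>R g)))\<^sup>2 + 8*(norm (g' - F (x - \<gamma> *\<^sub>R g)))\<^sup>2) / (1 - L*\<gamma>)"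
      by (rule B1[OF lip L_pos g0 w0]) (use p_pos sum_le2 in \<open>auto simp: p_def\<close>)
    have "A * (norm (F (x - \<omega> *\<^sub>R g' - \<gamma> *\<^sub>R g') - g'))\<^sup>2 \<le> A * ((L*\<gamma>) * (norm (f - g))\<^sup>2
      + (2*l\<^sup>2*(norm f)\<^sup>2 + 8*(norm (g' - f))\<^sup>2) / p)"
      using b1 A_nn unfolding f_def xh_def l_def p_def by (intro mult_left_mono) auto
    also have "\<dots> = A*(L*\<gamma>)*(norm (f - g))\<^sup>2 + kf*(norm f)\<^sup>2 + kv*(norm (g' - f))\<^sup>2"
      unfolding kf_def kv_def using p_pos by (simp add: field_simps)
    finally have h: "A * (norm (F (x - \<omega> *\<^sub>R g' - \<gamma> *\<^sub>R g') - g'))\<^sup>2 \<le>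
      A*(L*\<gamma>)*(norm (f - g))\<^sup>2 + kf*(norm f)\<^sup>2 + kv*(norm (g' - f))\<^sup>2" .
    have x': "(norm (x - \<omega> *\<^sub>R g' - xstar))\<^sup>2 = (norm (e + (-\<omega>) *\<^sub>R g'))\<^sup>2" unfolding e_def
      by (simp add: algebra_simps)
    have "Phi (Tr (x,g) v) = (norm (x - \<omega> *\<^sub>R g' - xstar))\<^sup>2 + A * (norm (F (x - \<omega> *\<^sub>R g' - \<gamma> *\<^sub>R g') - g'))\<^sup>2"
      unfolding Phi_def Tr_def g'_def xh_def by simp
    then show ?thesis using h x' unfolding Bd_def g'_def by linarith
  qed
  have intB: "integrable D Bd" unfolding Bd_def
    using sq_expand_integrable[of e "-\<omega>" xh] var_integrable[of xh] unfolding f_def by auto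
  have valB: "(\<integral>v. Bd v \<partial>D) = ((norm e)\<^sup>2 + 2*(-\<omega>)*(e \<bullet> f) + (-\<omega>)\<^sup>2*S2 xh) + A*(L*\<gamma>)*(norm (f - g))\<^sup>2
      + kf*(norm f)\<^sup>2 + kv*(S2 xh - (norm f)\<^sup>2)"
    unfolding Bd_def
    using sq_expand_integrable[of e "-\<omega>" xh] var_integrable[of xh] sq_expand_integral[of e "-\<omega>" xh]
      var_integral[of xh] unfolding f_def by (simp add: prob_space)
  have Bnn: "Bd v \<ge> 0" for v unfolding Bd_def using A_nn kf_nn kv_nn g0 L_pos by simp
  have "(\<integral>\<^sup>+v. ennreal (Phi (Tr (x,g) v)) \<partial>D) \<le> (\<integral>\<^sup>+v. ennreal (Bd v) \<partial>D)"
    using pw by (intro nn_integral_mono) (simp add: ennreal_leI)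
  also have "\<dots> = ennreal (\<integral>v. Bd v \<partial>D)"
    using intB Bnn by (intro nn_integral_eq_integral) auto
  finally have i1: "(\<integral>\<^sup>+v. ennreal (Phi (Tr (x,g) v)) \<partial>D) \<le> ennreal (\<integral>v. Bd v \<partial>D)" .
  have real_ineq: "(\<integral>v. Bd v \<partial>D) + cc * (norm g)\<^sup>2 \<le> aa * Phi (x,g) + bb"
  proof -
    have hip: "e \<bullet> f \<ge> -\<rho>*(norm f)\<^sup>2 + \<gamma>*((norm f)\<^sup>2 + (norm g)\<^sup>2 - (norm (f - g))\<^sup>2)/2"
    proof -
      have "e = (xh - xstar) + \<gamma> *\<^sub>R g" unfolding e_def xh_def by simp
      then have "e \<bullet> f = f \<bullet> (xh - xstar) + \<gamma> * (f \<bullet> g)" by (simp add: inner_add_left inner_add_right inner_commute)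
      moreover have "f \<bullet> (xh - xstar) \<ge> -\<rho>*(norm f)\<^sup>2" unfolding f_def by (rule minty)
      moreover have "(norm (f - g))\<^sup>2 = (norm f)\<^sup>2 - 2*(f \<bullet> g) + (norm g)\<^sup>2"
        by (simp add: power2_norm_eq_inner inner_diff_left inner_diff_right inner_commute)
      then have "\<gamma> * (f \<bullet> g) = \<gamma>*((norm f)\<^sup>2 + (norm g)\<^sup>2 - (norm (f - g))\<^sup>2)/2" by simp
      ultimately show ?thesis by linarith
    qed
    have hX: "(norm (xh - xstar))\<^sup>2 \<le> 4*(norm e)\<^sup>2 + (4/3)*\<gamma>\<^sup>2*(norm g)\<^sup>2"
    proof -
      have "xh - xstar = e + (-\<gamma>) *\<^sub>R g" unfolding e_def xh_def by simp
      then have "(norm (xh - xstar))\<^sup>2 \<le> 4*(norm e)\<^sup>2 + (4/3)*(norm ((-\<gamma>) *\<^sub>R g))\<^sup>2"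
        using sq_43[of e "(-\<gamma>) *\<^sub>R g"] by metis
      then show ?thesis by (simp add: power_mult_distrib)
    qed
    have hF: "(norm f)\<^sup>2 \<le> 2*(norm g)\<^sup>2 + 2*(norm (f - g))\<^sup>2"
      using sq_22[of g "f - g"] by simp
    have hS1: "S2 xh \<le> \<delta>*(norm (xh - xstar))\<^sup>2 + (norm f)\<^sup>2 + 2*\<sigma>sq" unfolding f_def by (rule S2_le)
    have hS2: "S2 xh \<ge> (norm f)\<^sup>2" unfolding f_def by (rule S2_ge)
    have B: "(norm e)\<^sup>2 - 2*\<omega>*(e \<bullet> f) + \<omega>\<^sup>2*S2 xh + A*(L*\<gamma>)*(norm (f - g))\<^sup>2 + kf*(norm f)\<^sup>2
       + kv*(S2 xh - (norm f)\<^sup>2) + cc*(norm g)\<^sup>2 \<le> aa*((norm e)\<^sup>2 + A*(norm (f - g))\<^sup>2) + bb"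
      by (rule B2[OF P1 P2 P3 aa_def bb_def rho_w w0 A_nn kf_nn kv_nn delta _ _ _ _ _ hip hS1 hS2 hX hF]) auto
    have "Phi (x,g) = (norm e)\<^sup>2 + A*(norm (f - g))\<^sup>2" unfolding Phi_def e_def f_def xh_def by simp
    then show ?thesis using B unfolding valB by simp
  qed
  have "(\<integral>\<^sup>+v. ennreal (Phi (Tr (x,g) v)) \<partial>D) + ennreal (cc * (norm g)\<^sup>2)
      \<le> ennreal (\<integral>v. Bd v \<partial>D) + ennreal (cc * (norm g)\<^sup>2)" using i1 by (rule add_right_mono)
  also have "\<dots> = ennreal ((\<integral>v. Bd v \<partial>D) + cc * (norm g)\<^sup>2)"
    using Bnn cc_pos by (intro ennreal_plus[symmetric] integral_nonneg_AE) auto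
  also have "\<dots> \<le> ennreal (aa * Phi (x,g) + bb)" using real_ineq by (rule ennreal_leI)
  finally show ?thesis .
qed

abbreviation SM :: "('a \<times> 'a) measure" where "SM \<equiv> borel \<Otimes>\<^sub>M borel"

lemma Tr_meas: "(\<lambda>p. Tr (fst p) (snd p)) \<in> measurable (SM \<Otimes>\<^sub>M D) SM"
proof -
  have e: "measurable (SM \<Otimes>\<^sub>M D) SM = measurable (SM \<Otimes>\<^sub>M borel) SM"
    by (rule measurable_cong_sets[OF sets_pair_measure_cong[OF refl D_sets] refl])
  show ?thesis unfolding e Tr_def Fv_def by measurable
qed

lemma Phi_meas[measurable]: "(\<lambda>\<sigma>. ennreal (Phi \<sigma>)) \<in> borel_measurable SM"
  unfolding Phi_def Favg_def by measurable

definition G :: "'a \<times> 'a \<Rightarrow> ennreal" where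
  "G \<sigma> = ennreal ((norm (F (fst \<sigma> - \<gamma> *\<^sub>R snd \<sigma>)))\<^sup>2)"

lemma G_meas: "G \<in> borel_measurable SM"
  unfolding G_def Favg_def by measurable

definition Phi' :: "'a \<times> 'a \<Rightarrow> ennreal" where
  "Phi' \<sigma> = (\<integral>\<^sup>+v. ennreal (Phi (Tr \<sigma> v)) \<partial>D)"

lemma PhiTr_meas: "(\<lambda>p. ennreal (Phi (Tr (fst p) (snd p)))) \<in> borel_measurable (SM \<Otimes>\<^sub>M D)"
  using measurable_comp[OF Tr_meas Phi_meas] by (simp add: comp_def)

lemma Phi'_meas: "Phi' \<in> borel_measurable SM"
proof -
  have "case_prod (\<lambda>\<sigma> v. ennreal (Phi (Tr \<sigma> v))) \<in> borel_measurable (SM \<Otimes>\<^sub>M D)"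
    using PhiTr_meas by (simp add: case_prod_beta')
  from borel_measurable_nn_integral[OF this] show ?thesis unfolding Phi'_def by simp
qed

lemma space_D: "space D = UNIV"
  using sets_eq_imp_space_eq[OF D_sets] by simp

lemma snd_Tr_meas: "(\<lambda>v. ennreal (cc * (norm (snd (Tr \<sigma> v)))\<^sup>2)) \<in> borel_measurable D"
  unfolding Tr_def by simp

lemma Phi'_step: "(\<integral>\<^sup>+v. Phi' (Tr \<sigma> v) \<partial>D) + ennreal cc * G \<sigma> \<le> ennreal aa * Phi' \<sigma> + ennreal bb"
proof -
  define xh where "xh = fst \<sigma> - \<gamma> *\<^sub>R snd \<sigma>"
  have Tm1: "(\<lambda>v. Phi' (Tr \<sigma> v)) \<in> borel_measurable D"
  proof -
    have "(\<lambda>v. (\<sigma>, v)) \<in> measurable D (SM \<Otimes>\<^sub>M D)"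
      by (auto intro!: measurable_Pair simp: space_pair_measure)
    from measurable_comp[OF measurable_comp[OF this Tr_meas] Phi'_meas] show ?thesis by (simp add: comp_def)
  qed
  have PT: "(\<lambda>v. ennreal (Phi (Tr \<sigma> v))) \<in> borel_measurable D"
  proof -
    have "(\<lambda>v. (\<sigma>, v)) \<in> measurable D (SM \<Otimes>\<^sub>M D)"
      by (auto intro!: measurable_Pair simp: space_pair_measure)
    from measurable_comp[OF this PhiTr_meas] show ?thesis by (simp add: comp_def)
  qed
  have "ennreal cc * G \<sigma> \<le> ennreal cc * ennreal (S2 xh)"
    unfolding G_def xh_def using S2_ge by (intro mult_left_mono ennreal_leI) auto
  also have "\<dots> = (\<integral>\<^sup>+v. ennreal (cc * (norm (snd (Tr \<sigma> v)))\<^sup>2) \<partial>D)"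
    unfolding S2_nn[symmetric] Tr_def xh_def using cc_pos
    by (simp add: ennreal_mult nn_integral_cmult)
  finally have c1: "ennreal cc * G \<sigma> \<le> (\<integral>\<^sup>+v. ennreal (cc * (norm (snd (Tr \<sigma> v)))\<^sup>2) \<partial>D)" .
  have "(\<integral>\<^sup>+v. Phi' (Tr \<sigma> v) \<partial>D) + ennreal cc * G \<sigma>
      \<le> (\<integral>\<^sup>+v. Phi' (Tr \<sigma> v) \<partial>D) + (\<integral>\<^sup>+v. ennreal (cc * (norm (snd (Tr \<sigma> v)))\<^sup>2) \<partial>D)"
    using c1 by (rule add_left_mono)
  also have "\<dots> = (\<integral>\<^sup>+v. Phi' (Tr \<sigma> v) + ennreal (cc * (norm (snd (Tr \<sigma> v)))\<^sup>2) \<partial>D)"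
    using Tm1 snd_Tr_meas by (intro nn_integral_add[symmetric]) auto
  also have "\<dots> \<le> (\<integral>\<^sup>+v. ennreal (aa * Phi (Tr \<sigma> v) + bb) \<partial>D)"
  proof (rule nn_integral_mono)
    fix v
    have "Phi' (Tr \<sigma> v) + ennreal (cc * (norm (snd (Tr \<sigma> v)))\<^sup>2)
      = (\<integral>\<^sup>+w. ennreal (Phi (Tr (fst (Tr \<sigma> v), snd (Tr \<sigma> v)) w)) \<partial>D) + ennreal (cc * (norm (snd (Tr \<sigma> v)))\<^sup>2)"
      unfolding Phi'_def by simp
    also have "\<dots> \<le> ennreal (aa * Phi (fst (Tr \<sigma> v), snd (Tr \<sigma> v)) + bb)" by (rule trans_step)
    finally show "Phi' (Tr \<sigma> v) + ennreal (cc * (norm (snd (Tr \<sigma> v)))\<^sup>2) \<le> ennreal (aa * Phi (Tr \<sigma> v) + bb)"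
      by simp
  qed
  also have "\<dots> = (\<integral>\<^sup>+v. ennreal aa * ennreal (Phi (Tr \<sigma> v)) + ennreal bb \<partial>D)"
    using aa_ge bb_nn Phi_nn by (intro nn_integral_cong) (simp add: ennreal_mult ennreal_plus)
  also have "\<dots> = ennreal aa * Phi' \<sigma> + ennreal bb"
    unfolding Phi'_def using PT by (simp add: nn_integral_add nn_integral_cmult emeasure_space_1)
  finally show ?thesis .
qed

lemma Phi'_le: "Phi' \<sigma> \<le> ennreal (aa * Phi \<sigma> + bb)"
proof -
  have "Phi' \<sigma> \<le> Phi' \<sigma> + ennreal (cc * (norm (snd \<sigma>))\<^sup>2)" by (rule add_increasing2) auto
  also have "\<dots> \<le> ennreal (aa * Phi \<sigma> + bb)" using trans_step[of "fst \<sigma>" "snd \<sigma>"] by (simp add: Phi'_def)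
  finally show ?thesis .
qed

definition "Phi0b x0 = (1 + A*(2*L\<^sup>2 + 4*\<delta>))*(norm (x0 - xstar))\<^sup>2 + 8*A*\<sigma>sq"

lemma init_bound: "(\<integral>\<^sup>+v. ennreal (Phi (x0, Fv Fs v x0)) \<partial>D) \<le> ennreal (Phi0b x0)"
proof -
  define E0 where "E0 = (norm (x0 - xstar))\<^sup>2"
  define Bd0 where "Bd0 v = E0 + A*(2*(norm (Fv Fs v x0))\<^sup>2 + 2*(norm (Fv Fs v x0 - F x0))\<^sup>2)" for v
  have pw: "Phi (x0, Fv Fs v x0) \<le> Bd0 v" for v
  proof -
    define g where "g = Fv Fs v x0"
    have "norm (F (x0 - \<gamma> *\<^sub>R g) - g) \<le> norm (F (x0 - \<gamma> *\<^sub>R g) - F x0) + norm (F x0 - g)"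
      using norm_triangle_ineq[of "F (x0 - \<gamma> *\<^sub>R g) - F x0" "F x0 - g"] by simp
    also have "norm (F (x0 - \<gamma> *\<^sub>R g) - F x0) \<le> L * norm (\<gamma> *\<^sub>R g)" using lip[of "x0 - \<gamma> *\<^sub>R g" x0] by simp
    also have "L * norm (\<gamma> *\<^sub>R g) = (L*\<gamma>) * norm g" using g0 by simp
    also have "\<dots> \<le> 1 * norm g" using q_lt by (intro mult_right_mono) auto
    finally have n: "norm (F (x0 - \<gamma> *\<^sub>R g) - g) \<le> norm g + norm (g - F x0)" by (simp add: norm_minus_commute)
    have "(norm (F (x0 - \<gamma> *\<^sub>R g) - g))\<^sup>2 \<le> (norm g + norm (g - F x0))\<^sup>2" using n by (simp add: power_mono)
    also have "\<dots> \<le> 2*(norm g)\<^sup>2 + 2*(norm (g - F x0))\<^sup>2" by (rule sq_sum2)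
    finally have "A * (norm (F (x0 - \<gamma> *\<^sub>R g) - g))\<^sup>2 \<le> A * (2*(norm g)\<^sup>2 + 2*(norm (g - F x0))\<^sup>2)"
      using A_nn by (intro mult_left_mono) auto
    then show ?thesis unfolding Phi_def Bd0_def g_def E0_def by simp
  qed
  have intB: "integrable D Bd0" unfolding Bd0_def using Fv_sq_integrable[of x0] var_integrable[of x0] by auto
  have valB: "(\<integral>v. Bd0 v \<partial>D) = E0 + A*(2*S2 x0 + 2*(S2 x0 - (norm (F x0))\<^sup>2))"
    unfolding Bd0_def using Fv_sq_integrable[of x0] var_integrable[of x0] var_integral[of x0]
    by (simp add: prob_space S2_def)
  have Bnn: "Bd0 v \<ge> 0" for v unfolding Bd0_def E0_def using A_nn by simp
  have "(\<integral>\<^sup>+v. ennreal (Phi (x0, Fv Fs v x0)) \<partial>D) \<le> (\<integral>\<^sup>+v. ennreal (Bd0 v) \<partial>D)"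
    using pw by (intro nn_integral_mono) (simp add: ennreal_leI)
  also have "\<dots> = ennreal (\<integral>v. Bd0 v \<partial>D)" using intB Bnn by (intro nn_integral_eq_integral) auto
  also have "\<dots> \<le> ennreal (Phi0b x0)"
  proof (rule ennreal_leI)
    have FL: "(norm (F x0))\<^sup>2 \<le> L\<^sup>2 * E0"
    proof -
      have "(norm (F x0))\<^sup>2 \<le> (L * norm (x0 - xstar))\<^sup>2" using F_bound by (simp add: power_mono)
      then show ?thesis unfolding E0_def by (simp add: power_mult_distrib)
    qed
    have S: "S2 x0 \<le> \<delta> * E0 + (norm (F x0))\<^sup>2 + 2 * \<sigma>sq" unfolding E0_def by (rule S2_le)
    have "2*S2 x0 + 2*(S2 x0 - (norm (F x0))\<^sup>2) \<le> (2*L\<^sup>2 + 4*\<delta>)*E0 + 8*\<sigma>sq"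
      using S FL by (simp add: algebra_simps)
    then have "A*(2*S2 x0 + 2*(S2 x0 - (norm (F x0))\<^sup>2)) \<le> A*((2*L\<^sup>2 + 4*\<delta>)*E0 + 8*\<sigma>sq)"
      using A_nn by (intro mult_left_mono) auto
    then show "(\<integral>v. Bd0 v \<partial>D) \<le> Phi0b x0" unfolding valB Phi0b_def E0_def by (simp add: algebra_simps)
  qed
  finally show ?thesis .
qed

definition "Triv x0 = L\<^sup>2*(2*(norm (x0 - xstar))\<^sup>2 + 2*\<gamma>\<^sup>2*((\<delta> + L\<^sup>2)*(norm (x0 - xstar))\<^sup>2 + 2*\<sigma>sq))"

lemma triv_bound: "(\<integral>\<^sup>+v. ennreal ((norm (F (x0 - \<gamma> *\<^sub>R Fv Fs v x0)))\<^sup>2) \<partial>D) \<le> ennreal (Triv x0)"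
proof -
  define E0 where "E0 = (norm (x0 - xstar))\<^sup>2"
  define Bd0 where "Bd0 v = L\<^sup>2*(2*E0 + 2*\<gamma>\<^sup>2*(norm (Fv Fs v x0))\<^sup>2)" for v
  have pw: "(norm (F (x0 - \<gamma> *\<^sub>R Fv Fs v x0)))\<^sup>2 \<le> Bd0 v" for v
  proof -
    define g where "g = Fv Fs v x0"
    have "(norm (F (x0 - \<gamma> *\<^sub>R g)))\<^sup>2 \<le> (L * norm (x0 - \<gamma> *\<^sub>R g - xstar))\<^sup>2"
      using F_bound by (simp add: power_mono)
    also have "\<dots> = L\<^sup>2 * (norm ((x0 - xstar) + (-\<gamma>) *\<^sub>R g))\<^sup>2" by (simp add: power_mult_distrib algebra_simps)
    also have "\<dots> \<le> L\<^sup>2 * (2*(norm (x0 - xstar))\<^sup>2 + 2*(norm ((-\<gamma>) *\<^sub>R g))\<^sup>2)"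
      by (intro mult_left_mono sq_22) auto
    also have "\<dots> = Bd0 v" unfolding Bd0_def E0_def g_def by (simp add: power_mult_distrib)
    finally show ?thesis unfolding g_def .
  qed
  have intB: "integrable D Bd0" unfolding Bd0_def using Fv_sq_integrable[of x0] by auto
  have valB: "(\<integral>v. Bd0 v \<partial>D) = L\<^sup>2*(2*E0 + 2*\<gamma>\<^sup>2*S2 x0)"
    unfolding Bd0_def using Fv_sq_integrable[of x0] by (simp add: prob_space S2_def)
  have Bnn: "Bd0 v \<ge> 0" for v unfolding Bd0_def E0_def by simp
  have "(\<integral>\<^sup>+v. ennreal ((norm (F (x0 - \<gamma> *\<^sub>R Fv Fs v x0)))\<^sup>2) \<partial>D) \<le> (\<integral>\<^sup>+v. ennreal (Bd0 v) \<partial>D)"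
    using pw by (intro nn_integral_mono) (simp add: ennreal_leI)
  also have "\<dots> = ennreal (\<integral>v. Bd0 v \<partial>D)" using intB Bnn by (intro nn_integral_eq_integral) auto
  also have "\<dots> \<le> ennreal (Triv x0)"
  proof (rule ennreal_leI)
    have FL: "(norm (F x0))\<^sup>2 \<le> L\<^sup>2 * E0"
    proof -
      have "(norm (F x0))\<^sup>2 \<le> (L * norm (x0 - xstar))\<^sup>2" using F_bound by (simp add: power_mono)
      then show ?thesis unfolding E0_def by (simp add: power_mult_distrib)
    qed
    have S: "S2 x0 \<le> (\<delta> + L\<^sup>2) * E0 + 2 * \<sigma>sq" using S2_le[of x0] FL unfolding E0_def by (simp add: algebra_simps)
    have "2*\<gamma>\<^sup>2*S2 x0 \<le> 2*\<gamma>\<^sup>2*((\<delta> + L\<^sup>2) * E0 + 2 * \<sigma>sq)" using S by (intro mult_left_mono) auto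
    then have "L\<^sup>2*(2*E0 + 2*\<gamma>\<^sup>2*S2 x0) \<le> L\<^sup>2*(2*E0 + 2*\<gamma>\<^sup>2*((\<delta> + L\<^sup>2) * E0 + 2 * \<sigma>sq))"
      by (intro mult_left_mono) auto
    then show "(\<integral>v. Bd0 v \<partial>D) \<le> Triv x0" unfolding valB Triv_def E0_def .
  qed
  finally show ?thesis .
qed

definition "stt x0 s k = run Tr (x0, Fv Fs (shd s) x0) k (stl s)"

lemma speg_stt: "speg Fs \<gamma> \<omega> x0 (snth s) k = (fst (stt x0 s k), fst (stt x0 s k) - \<gamma> *\<^sub>R snd (stt x0 s k))"
proof (induction k)
  case 0 then show ?case by (simp add: stt_def)
next
  case (Suc k)
  then show ?case by (simp add: stt_def Tr_def Let_def)
qed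

lemma G_stt: "G (stt x0 s k) = ennreal ((norm (F (speg_xhat Fs \<gamma> \<omega> x0 (snth s) k)))\<^sup>2)"
  unfolding G_def speg_xhat_def speg_stt by simp

lemma run_meas2:
  assumes Tm: "(\<lambda>p. T (fst p) (snd p)) \<in> measurable (S \<Otimes>\<^sub>M M) S"
    and s0: "\<sigma>0 \<in> measurable N S" and ss: "ss \<in> measurable N (stream_space M)"
  shows "(\<lambda>w. run T (\<sigma>0 w) k (ss w)) \<in> measurable N S"
proof (induction k)
  case 0 then show ?case using s0 by simp
next
  case (Suc k)
  have "(\<lambda>w. ss w !! k) \<in> measurable N M" using measurable_comp[OF ss measurable_snth] by (simp add: comp_def)
  then have "(\<lambda>w. (run T (\<sigma>0 w) k (ss w), ss w !! k)) \<in> measurable N (S \<Otimes>\<^sub>M M)"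
    using Suc by (intro measurable_Pair) auto
  from measurable_comp[OF this Tm] show ?case by (simp add: comp_def)
qed

lemma st0_meas: "(\<lambda>v. (x0, Fv Fs v x0)) \<in> measurable D SM"
  by (auto intro!: measurable_Pair simp: space_pair_measure)

lemma stt_meas: "(\<lambda>s. stt x0 s k) \<in> measurable (stream_space D) SM"
  unfolding stt_def
proof (rule run_meas2[OF Tr_meas])
  show "(\<lambda>w. (x0, Fv Fs (shd w) x0)) \<in> measurable (stream_space D) SM"
    using measurable_comp[OF measurable_shd st0_meas] by (simp add: comp_def)
qed simp

lemma stt_Stream: "stt x0 (v ## s) k = run Tr (x0, Fv Fs v x0) k s"
  unfolding stt_def by simp

lemma chain:
  "(\<Sum>k<K'. ennreal ((1/aa)^(Suc k) * cc) * (\<integral>\<^sup>+s. G (stt x0 s k) \<partial>stream_space D))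
    \<le> ennreal (aa * Phi0b x0 + bb) + ennreal (bb * (\<Sum>k<K'. (1/aa)^(Suc k)))"
proof -
  interpret SS: prob_space "stream_space D" by (rule prob_space_stream_space)
  define r where "r = 1/aa"
  have r0: "r > 0" unfolding r_def using aa_ge by simp
  have Gs: "(\<lambda>s. G (stt x0 s k)) \<in> borel_measurable (stream_space D)" for k
    using measurable_comp[OF stt_meas G_meas] by (simp add: comp_def)
  have Ps: "(\<lambda>s. Phi' (stt x0 s K')) \<in> borel_measurable (stream_space D)"
    using measurable_comp[OF stt_meas Phi'_meas] by (simp add: comp_def)
  define J where "J s = (\<Sum>k<K'. ennreal (r^(Suc k) * cc) * G (stt x0 s k)) + ennreal (r^K') * Phi' (stt x0 s K')" for s
  have Jm: "J \<in> borel_measurable (stream_space D)" unfolding J_def using Gs Ps by measurable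
  have "(\<Sum>k<K'. ennreal (r^(Suc k) * cc) * (\<integral>\<^sup>+s. G (stt x0 s k) \<partial>stream_space D))
      = (\<integral>\<^sup>+s. (\<Sum>k<K'. ennreal (r^(Suc k) * cc) * G (stt x0 s k)) \<partial>stream_space D)"
    using Gs by (simp add: nn_integral_sum nn_integral_cmult)
  also have "\<dots> \<le> (\<integral>\<^sup>+s. J s \<partial>stream_space D)" unfolding J_def by (intro nn_integral_mono) auto
  also have "\<dots> = (\<integral>\<^sup>+v. (\<integral>\<^sup>+s. J (v ## s) \<partial>stream_space D) \<partial>D)"
    by (rule nn_integral_stream_space[OF Jm])
  also have "\<dots> \<le> (\<integral>\<^sup>+v. Phi' (x0, Fv Fs v x0) + ennreal (bb * (\<Sum>k<K'. r^(Suc k))) \<partial>D)"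
  proof (rule nn_integral_mono)
    fix v
    have "(\<integral>\<^sup>+s. J (v ## s) \<partial>stream_space D) = (\<integral>\<^sup>+s. (\<Sum>k<K'. ennreal ((1/aa)^(Suc k) * cc) * G (run Tr (x0, Fv Fs v x0) k s))
        + ennreal ((1/aa)^K') * Phi' (run Tr (x0, Fv Fs v x0) K' s) \<partial>stream_space D)"
      unfolding J_def stt_Stream r_def ..
    also have "\<dots> \<le> Phi' (x0, Fv Fs v x0) + ennreal (bb * (\<Sum>k<K'. (1/aa)^(Suc k)))"
      by (rule markov[OF Tr_meas Phi'_meas G_meas Phi'_step]) (use aa_ge cc_pos bb_nn in \<open>auto simp: space_pair_measure\<close>)
    finally show "(\<integral>\<^sup>+s. J (v ## s) \<partial>stream_space D) \<le> Phi' (x0, Fv Fs v x0) + ennreal (bb * (\<Sum>k<K'. r^(Suc k)))"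
      unfolding r_def .
  qed
  also have "\<dots> = (\<integral>\<^sup>+v. Phi' (x0, Fv Fs v x0) \<partial>D) + ennreal (bb * (\<Sum>k<K'. r^(Suc k)))"
  proof -
    have "(\<lambda>v. Phi' (x0, Fv Fs v x0)) \<in> borel_measurable D"
      using measurable_comp[OF st0_meas Phi'_meas] by (simp add: comp_def)
    then show ?thesis by (simp add: nn_integral_add emeasure_space_1)
  qed
  also have "(\<integral>\<^sup>+v. Phi' (x0, Fv Fs v x0) \<partial>D) \<le> ennreal (aa * Phi0b x0 + bb)"
  proof -
    have PT: "(\<lambda>v. ennreal (Phi (x0, Fv Fs v x0))) \<in> borel_measurable D"
      using measurable_comp[OF st0_meas Phi_meas] by (simp add: comp_def)
    have "(\<integral>\<^sup>+v. Phi' (x0, Fv Fs v x0) \<partial>D) \<le> (\<integral>\<^sup>+v. ennreal aa * ennreal (Phi (x0, Fv Fs v x0)) + ennreal bb \<partial>D)"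
      using Phi'_le aa_ge bb_nn Phi_nn by (intro nn_integral_mono) (simp add: ennreal_mult ennreal_plus)
    also have "\<dots> = ennreal aa * (\<integral>\<^sup>+v. ennreal (Phi (x0, Fv Fs v x0)) \<partial>D) + ennreal bb"
      using PT by (simp add: nn_integral_add nn_integral_cmult emeasure_space_1)
    also have "\<dots> \<le> ennreal aa * ennreal (Phi0b x0) + ennreal bb"
      using init_bound by (intro add_right_mono mult_left_mono) auto
    also have "\<dots> = ennreal (aa * Phi0b x0 + bb)"
    proof -
      have "Phi0b x0 \<ge> 0" unfolding Phi0b_def using A_nn delta sigma by simp
      then show ?thesis using aa_ge bb_nn by (simp add: ennreal_mult ennreal_plus)
    qed
    finally show ?thesis .
  qed
  finally show ?thesis unfolding r_def by (simp add: add_right_mono)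
qed

definition "W = \<omega>*\<gamma>"
lemma W_pos: "W > 0" unfolding W_def using w0 g0 by simp
lemma l_le: "l \<le> 1/8" using l_lt p_half by simp
lemma W_le: "W*L\<^sup>2 \<le> 1/8"
proof -
  have "W*L\<^sup>2 = l*(L*\<gamma>)" unfolding W_def l_def by (simp add: power2_eq_square)
  also have "\<dots> \<le> (1/8)*1" using l_le l_pos q_lt q_gt by (intro mult_mono) auto
  finally show ?thesis by simp
qed
lemma dp: "\<delta>/p \<le> L\<^sup>2*l/32"
proof -
  have "\<delta>/p \<le> (p*L^3*\<omega>/32)/p" using delta_le' p_pos by (intro divide_right_mono) auto
  also have "\<dots> = L\<^sup>2*l/32" unfolding l_def using p_pos by (simp add: power2_eq_square power3_eq_cube)
  finally show ?thesis .
qed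
lemma aa_eq: "aa - 1 = 44*W*((\<delta>/p)/p)" unfolding aa_def Mb_def W_def by (simp add: power2_eq_square)
lemma u1: "(aa - 1)*p \<le> 44*W*L\<^sup>2/256"
proof -
  have "(aa - 1)*p = 44*W*(\<delta>/p)" unfolding aa_eq using p_pos by simp
  also have "\<dots> \<le> 44*W*(L\<^sup>2*(1/8)/32)"
  proof (intro mult_left_mono)
    have "L\<^sup>2*l/32 \<le> L\<^sup>2*(1/8)/32" using l_le by (intro divide_right_mono mult_left_mono) auto
    then show "\<delta>/p \<le> L\<^sup>2*(1/8)/32" using dp by linarith
  qed (use W_pos in auto)
  finally show ?thesis by simp
qed
lemma u2: "aa - 1 \<le> 1/20"
proof -
  have "(\<delta>/p)/p \<le> (L\<^sup>2*l/32)/p" using dp p_pos by (intro divide_right_mono) auto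
  also have "\<dots> = L\<^sup>2*(l/p)/32" by simp
  also have "\<dots> \<le> L\<^sup>2*(1/4)/32" using lp_le by (intro divide_right_mono mult_left_mono) auto
  finally have "W*((\<delta>/p)/p) \<le> W*(L\<^sup>2*(1/4)/32)" using W_pos by (intro mult_left_mono) auto
  also have "\<dots> = (W*L\<^sup>2)/128" by simp
  also have "\<dots> \<le> (1/8)/128" using W_le by (intro divide_right_mono) auto
  finally show ?thesis unfolding aa_eq by simp
qed
lemma cc_eq: "cc = W*(p - 2*l)/p" unfolding cc_def W_def by simp
lemma pA: "p*A = (4/3)*W" unfolding A_def W_def using p_pos by simp

lemma e_part: "aa*(1 + A*(2*L\<^sup>2+4*\<delta>))/cc \<le> (p + 8*W*(\<delta>+L\<^sup>2))/(W*(p - 4*l))"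
proof -
  define X where "X = (4/3)*W*(2*L\<^sup>2+4*\<delta>)"
  define u where "u = aa - 1"
  have X0: "X \<ge> 0" unfolding X_def using W_pos delta by simp
  have hu1: "u*p \<le> 44*W*L\<^sup>2/256" unfolding u_def by (rule u1)
  have "u*X \<le> (1/20)*X" unfolding u_def using u2 X0 by (intro mult_right_mono) auto
  then have hu2: "u*X \<le> X/20" by simp
  have num: "aa*(p + X) \<le> p + 8*W*(\<delta>+L\<^sup>2)"
  proof -
    have "aa*(p + X) = p + X + u*p + u*X" unfolding u_def by (simp add: algebra_simps)
    also have "\<dots> \<le> p + X + 44*W*L\<^sup>2/256 + X/20" using hu1 hu2 by simp
    also have "\<dots> \<le> p + 8*W*(\<delta>+L\<^sup>2)"
    proof -
      have h0: "W*L\<^sup>2 \<ge> 0" "W*\<delta> \<ge> 0" using W_pos delta by auto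
      have h1: "X = (8/3)*(W*L\<^sup>2) + (16/3)*(W*\<delta>)" unfolding X_def by (simp add: algebra_simps)
      have h2: "8*W*(\<delta>+L\<^sup>2) = 8*(W*\<delta>) + 8*(W*L\<^sup>2)" by (simp add: algebra_simps)
      have h3: "44*W*L\<^sup>2/256 = (44/256)*(W*L\<^sup>2)" by simp
      show ?thesis unfolding h2 h3 using h0 h1 by linarith
    qed
    finally show ?thesis .
  qed
  have e1: "aa*(1 + A*(2*L\<^sup>2+4*\<delta>))/cc = aa*(p + X)/(W*(p - 2*l))"
  proof -
    have "aa*(1 + A*(2*L\<^sup>2+4*\<delta>))/cc = aa*(p*(1 + A*(2*L\<^sup>2+4*\<delta>)))/(W*(p - 2*l))"
      unfolding cc_eq using p_pos by (simp add: field_simps)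
    also have "p*(1 + A*(2*L\<^sup>2+4*\<delta>)) = p + X" unfolding X_def
      by (simp add: distrib_left mult.assoc[symmetric] pA)
    finally show ?thesis .
  qed
  have d1: "W*(p - 4*l) > 0" using W_pos l_lt by simp
  have d2: "W*(p - 4*l) \<le> W*(p - 2*l)" using W_pos l_pos by (intro mult_left_mono) auto
  have N0: "0 \<le> p + 8*W*(\<delta>+L\<^sup>2)" using p_pos W_pos delta by simp
  have "aa*(p + X)/(W*(p - 2*l)) \<le> (p + 8*W*(\<delta>+L\<^sup>2))/(W*(p - 2*l))"
    using num d1 d2 by (intro divide_right_mono) auto
  also have "\<dots> \<le> (p + 8*W*(\<delta>+L\<^sup>2))/(W*(p - 4*l))"
    using N0 d1 d2 by (intro divide_left_mono) auto
  finally show ?thesis unfolding e1 .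
qed

lemma s_part: "(aa*(8*A*\<sigma>sq) + 2*bb)/cc \<le> 64*\<sigma>sq/(p\<^sup>2*(p - 4*l))"
proof -
  have aa2: "aa \<le> 2" using u2 by simp
  have A8: "8*A = (32/3)*W/p" using pA p_pos by (simp add: field_simps)
  have bb2: "2*bb = 44*W*\<sigma>sq/p\<^sup>2" unfolding bb_def Mb_def W_def by simp
  define Y where "Y = W*\<sigma>sq"
  define Z8 where "Z8 = 8*A*\<sigma>sq"
  have f1: "aa*Z8 \<le> 2*Z8" unfolding Z8_def using aa2 A_nn sigma by (intro mult_right_mono) auto
  have f2: "2*Z8 = (64/(3*p))*Y"
  proof -
    have Aeq: "A = (4/3)*W/p" using pA p_pos by (simp add: field_simps)
    show ?thesis unfolding Y_def Z8_def Aeq using p_pos by (simp add: field_simps)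
  qed
  have f3: "2*bb = (44/p\<^sup>2)*Y" unfolding Y_def bb2 by simp
  have f4: "(W*\<sigma>sq)*(64/(3*p) + 44/p\<^sup>2) = (64/(3*p))*Y + (44/p\<^sup>2)*Y" unfolding Y_def by (simp add: algebra_simps)
  have n1: "aa*(8*A*\<sigma>sq) + 2*bb \<le> (W*\<sigma>sq)*(64/(3*p) + 44/p\<^sup>2)"
    using f1 f2 f3 f4 unfolding Z8_def by linarith
  have k: "64/(3*p) + 44/p\<^sup>2 \<le> 64/p^3"
  proof -
    have "p\<^sup>2 \<le> (1/2)\<^sup>2" using p_pos p_half by (intro power_mono) auto
    then have "p\<^sup>2 \<le> 1/4" by (simp add: power2_eq_square)
    then have "(64/3)*p\<^sup>2 + 44*p \<le> 64" using p_half by linarith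
    then have "((64/3)*p\<^sup>2 + 44*p)/p^3 \<le> 64/p^3" using p_pos by (intro divide_right_mono) auto
    moreover have "((64/3)*p\<^sup>2 + 44*p)/p^3 = 64/(3*p) + 44/p\<^sup>2" using p_pos
      by (simp add: field_simps power2_eq_square power3_eq_cube)
    ultimately show ?thesis by simp
  qed
  have n2: "aa*(8*A*\<sigma>sq) + 2*bb \<le> (W*\<sigma>sq)*(64/p^3)"
    using n1 mult_left_mono[OF k, of "W*\<sigma>sq"] W_pos sigma by simp
  have "(W*\<sigma>sq)*(64/p^3) \<le> 64*\<sigma>sq/(p\<^sup>2*(p - 4*l)) * cc"
  proof -
    have "64*\<sigma>sq/(p\<^sup>2*(p - 4*l)) * cc = (W*\<sigma>sq)*(64/p^3) * ((p - 2*l)/(p - 4*l))"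
      unfolding cc_eq using p_pos l_lt by (simp add: field_simps power2_eq_square power3_eq_cube)
    moreover have "(p - 2*l)/(p - 4*l) \<ge> 1" using l_lt l_pos by simp
    moreover have "(W*\<sigma>sq)*(64/p^3) \<ge> 0" using W_pos sigma p_pos by simp
    ultimately have "((W*\<sigma>sq)*(64/p^3))*1 \<le> ((W*\<sigma>sq)*(64/p^3)) * ((p - 2*l)/(p - 4*l))"
      by (intro mult_left_mono) auto
    then show ?thesis using \<open>64*\<sigma>sq/(p\<^sup>2*(p - 4*l)) * cc = (W*\<sigma>sq)*(64/p^3) * ((p - 2*l)/(p - 4*l))\<close>
      by (metis mult_1_right)
  qed
  then have "aa*(8*A*\<sigma>sq) + 2*bb \<le> 64*\<sigma>sq/(p\<^sup>2*(p - 4*l)) * cc" using n2 by linarith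
  then show ?thesis using cc_pos by (simp add: pos_divide_le_eq)
qed

lemma t_part: "Triv x0 \<le> (p + 8*W*(\<delta>+L\<^sup>2))/(W*(p - 4*l)) * (norm (x0 - xstar))\<^sup>2 + 64*\<sigma>sq/(p\<^sup>2*(p - 4*l))"
proof -
  define E0 where "E0 = (norm (x0 - xstar))\<^sup>2"
  have E00: "E0 \<ge> 0" unfolding E0_def by simp
  have dg: "\<delta>*\<gamma>\<^sup>2 \<le> 1"
  proof -
    have "\<delta>*\<gamma>\<^sup>2 \<le> (p*L^3*\<omega>/32)*\<gamma>\<^sup>2" using delta_le' by (intro mult_right_mono) auto
    also have "\<dots> = (p*l/32)*(L*\<gamma>)\<^sup>2" unfolding l_def by (simp add: power2_eq_square power3_eq_cube)
    also have "\<dots> \<le> (p*l/32)*1"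
    proof (rule mult_left_mono)
      show "(L*\<gamma>)\<^sup>2 \<le> 1" using q_lt q_gt by (simp add: abs_square_le_1)
    qed (use p_pos l_pos in auto)
    also have "\<dots> \<le> 1"
    proof -
      have "p*l \<le> 1*1" using p_half l_le p_pos l_pos by (intro mult_mono) auto
      then show ?thesis by simp
    qed
    finally show ?thesis by simp
  qed
  have q2: "(L*\<gamma>)\<^sup>2 \<le> 1" using q_lt q_gt by (simp add: abs_square_le_1)
  have tr: "Triv x0 = (2*L\<^sup>2 + 2*(L\<^sup>2*(\<delta>*\<gamma>\<^sup>2)) + 2*(L\<^sup>2*(L*\<gamma>)\<^sup>2))*E0 + 4*(L*\<gamma>)\<^sup>2*\<sigma>sq"
    unfolding Triv_def E0_def by (simp add: algebra_simps power2_eq_square)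
  have c1: "(2*L\<^sup>2 + 2*(L\<^sup>2*(\<delta>*\<gamma>\<^sup>2)) + 2*(L\<^sup>2*(L*\<gamma>)\<^sup>2)) \<le> 8*L\<^sup>2"
  proof -
    define a1 where "a1 = L\<^sup>2*(\<delta>*\<gamma>\<^sup>2)"
    define a2 where "a2 = L\<^sup>2*(L*\<gamma>)\<^sup>2"
    define a0 where "a0 = L\<^sup>2"
    have "a1 \<le> a0" unfolding a1_def a0_def using mult_left_mono[OF dg, of "L\<^sup>2"] by simp
    moreover have "a2 \<le> a0" unfolding a2_def a0_def using mult_left_mono[OF q2, of "L\<^sup>2"] by simp
    moreover have "a0 \<ge> 0" unfolding a0_def by simp
    ultimately have "2*a0 + 2*a1 + 2*a2 \<le> 8*a0" by linarith
    then show ?thesis unfolding a0_def a1_def a2_def .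
  qed
  have c2: "8*L\<^sup>2 \<le> (p + 8*W*(\<delta>+L\<^sup>2))/(W*(p - 4*l))"
  proof -
    have d1: "W*(p - 4*l) > 0" using W_pos l_lt by simp
    have "8*L\<^sup>2*(W*(p - 4*l)) \<le> p"
    proof -
      have "8*L\<^sup>2*(W*(p - 4*l)) = 8*(W*L\<^sup>2)*(p - 4*l)" by simp
      also have "\<dots> \<le> 8*(1/8)*(p - 4*l)" using W_le l_lt by (intro mult_right_mono mult_left_mono) auto
      also have "\<dots> \<le> p" using l_pos by simp
      finally show ?thesis .
    qed
    also have "p \<le> p + 8*W*(\<delta>+L\<^sup>2)" using W_pos delta by simp
    finally show ?thesis using d1 by (simp add: pos_le_divide_eq)
  qed
  have c3: "4*(L*\<gamma>)\<^sup>2*\<sigma>sq \<le> 64*\<sigma>sq/(p\<^sup>2*(p - 4*l))"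
  proof -
    have d: "p\<^sup>2*(p - 4*l) > 0" using p_pos l_lt by simp
    have "p\<^sup>2*(p - 4*l) \<le> 1*1"
      using p_pos p_half l_pos l_lt by (intro mult_mono) (auto simp: power_le_one)
    then have "\<sigma>sq*(p\<^sup>2*(p - 4*l)) \<le> \<sigma>sq*1" using sigma by (intro mult_left_mono) auto
    then have "(4*\<sigma>sq)*(p\<^sup>2*(p - 4*l)) \<le> 64*\<sigma>sq" using sigma by linarith
    then have "4*\<sigma>sq \<le> 64*\<sigma>sq/(p\<^sup>2*(p - 4*l))" using d by (simp only: pos_le_divide_eq)
    moreover have "4*(L*\<gamma>)\<^sup>2*\<sigma>sq \<le> 4*1*\<sigma>sq" using q2 sigma by (intro mult_right_mono mult_left_mono) auto
    ultimately show ?thesis by simp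
  qed
  have "Triv x0 \<le> 8*L\<^sup>2*E0 + 64*\<sigma>sq/(p\<^sup>2*(p - 4*l))"
    unfolding tr using mult_right_mono[OF c1 E00] c3 by linarith
  also have "8*L\<^sup>2*E0 \<le> (p + 8*W*(\<delta>+L\<^sup>2))/(W*(p - 4*l)) * E0" using c2 E00 by (intro mult_right_mono) auto
  finally show ?thesis unfolding E0_def by simp
qed

lemma mk0_bound: "(\<integral>\<^sup>+s. G (stt x0 s 0) \<partial>stream_space D) \<le> ennreal (Triv x0)"
proof -
  have Gm: "(\<lambda>s. G (stt x0 s 0)) \<in> borel_measurable (stream_space D)"
    using measurable_comp[OF stt_meas G_meas] by (simp add: comp_def)
  have "(\<integral>\<^sup>+s. G (stt x0 s 0) \<partial>stream_space D) = (\<integral>\<^sup>+v. (\<integral>\<^sup>+s. G (stt x0 (v ## s) 0) \<partial>stream_space D) \<partial>D)"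
    by (rule nn_integral_stream_space[OF Gm])
  also have "\<dots> = (\<integral>\<^sup>+v. ennreal ((norm (F (x0 - \<gamma> *\<^sub>R Fv Fs v x0)))\<^sup>2) \<partial>D)"
  proof -
    interpret SS: prob_space "stream_space D" by (rule prob_space_stream_space)
    show ?thesis by (simp add: stt_Stream G_def SS.emeasure_space_1)
  qed
  also have "\<dots> \<le> ennreal (Triv x0)" by (rule triv_bound)
  finally show ?thesis .
qed

lemma main:
  fixes x0 :: 'a and K :: nat
  assumes K: "K \<ge> 2"
  shows "(MIN k\<in>{0..K-1}. \<integral>\<^sup>+ s. ennreal ((norm (Favg Fs (speg_xhat Fs \<gamma> \<omega> x0 (snth s) k)))\<^sup>2)
              \<partial>(stream_space D))
         \<le> ennreal (
             (1 + 8 * \<omega> * \<gamma> * (\<delta> + L\<^sup>2) - L * \<gamma>)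
               * (1 + 48 * \<omega> * \<gamma> * \<delta> / (1 - L * \<gamma>)\<^sup>2) ^ (K - 1) * (norm (x0 - xstar))\<^sup>2
             / (\<omega> * \<gamma> * (1 - L * (\<gamma> + 4 * \<omega>)) * real (K - 1))
           + 8 * (8 + (1 - L * \<gamma>)\<^sup>2 / real (K - 1)
                     * (1 + 48 * \<omega> * \<gamma> * \<delta> / (1 - L * \<gamma>)\<^sup>2) ^ (K - 1)) * \<sigma>sq
             / ((1 - L * \<gamma>)\<^sup>2 * (1 - L * (\<gamma> + 4 * \<omega>))))"
    (is "?m \<le> ennreal ?RHS")
proof -
  define K' where "K' = K - 1"
  have K1: "K' \<ge> 1" unfolding K'_def using K by simp
  define mk where "mk k = (\<integral>\<^sup>+ s. ennreal ((norm (Favg Fs (speg_xhat Fs \<gamma> \<omega> x0 (snth s) k)))\<^sup>2) \<partial>(stream_space D))" for k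
  have mkG: "mk k = (\<integral>\<^sup>+s. G (stt x0 s k) \<partial>stream_space D)" for k
    unfolding mk_def G_stt ..
  have mle: "?m \<le> mk k" if "k \<le> K'" for k
  proof -
    have "mk k \<in> (\<lambda>k. \<integral>\<^sup>+ s. ennreal ((norm (Favg Fs (speg_xhat Fs \<gamma> \<omega> x0 (snth s) k)))\<^sup>2) \<partial>(stream_space D)) ` {0..K-1}"
      unfolding mk_def using that K'_def by (intro imageI) simp
    then show ?thesis by (intro Min_le) auto
  qed
  define r where "r = 1/aa"
  have r0: "r > 0" "r \<le> 1" unfolding r_def using aa_ge by auto
  define B where "B = (\<Sum>k<K'. r^(Suc k))"
  have B_ge: "B \<ge> real K' * r^K'"
  proof -
    have "(\<Sum>k<K'. r^K') \<le> B" unfolding B_def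
      using r0 by (intro sum_mono power_decreasing) auto
    then show ?thesis by simp
  qed
  have "real K' * r^K' > 0" using K1 r0 by simp
  then have B_pos: "B > 0" using B_ge by linarith
  define E0 where "E0 = (norm (x0 - xstar))\<^sup>2"
  have E00: "E0 \<ge> 0" unfolding E0_def by simp
  have Phi0b_nn: "Phi0b x0 \<ge> 0" unfolding Phi0b_def using A_nn delta sigma by simp
  define Z where "Z = aa * Phi0b x0 + bb + bb * B"
  have Z_nn: "Z \<ge> 0" unfolding Z_def using aa_ge Phi0b_nn bb_nn B_pos by simp
  have m1: "?m \<le> ennreal (Z / (cc * B))"
  proof (rule ennreal_div_bound)
    show "cc * B > 0" using cc_pos B_pos by simp
    have "ennreal (cc * B) * ?m = (\<Sum>k<K'. ennreal (r^(Suc k) * cc) * ?m)"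
    proof (rule sum_ennreal_mult)
      show "\<And>k. 0 \<le> r^(Suc k) * cc" using r0 cc_pos by simp
      show "(\<Sum>k<K'. r^(Suc k) * cc) = cc * B" unfolding B_def by (simp add: sum_distrib_left mult.commute)
    qed
    also have "\<dots> \<le> (\<Sum>k<K'. ennreal (r^(Suc k) * cc) * mk k)"
      by (rule sum_mult_mono) (use mle in auto)
    also have "\<dots> \<le> ennreal (aa * Phi0b x0 + bb) + ennreal (bb * B)"
      unfolding mkG r_def B_def by (rule chain)
    also have "\<dots> = ennreal Z" unfolding Z_def
    proof (rule ennreal_plus[symmetric])
      show "0 \<le> aa * Phi0b x0 + bb" using aa_ge Phi0b_nn bb_nn by simp
      show "0 \<le> bb * B" using bb_nn B_pos by simp
    qed
    finally show "ennreal (cc * B) * ?m \<le> ennreal Z" .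
  qed
  have m2: "?m \<le> ennreal (Triv x0)"
  proof -
    have "?m \<le> mk 0" by (rule mle) simp
    also have "mk 0 \<le> ennreal (Triv x0)" unfolding mkG by (rule mk0_bound)
    finally show ?thesis .
  qed
  define ap where "ap = 1 + 48 * \<omega> * \<gamma> * \<delta> / (1 - L * \<gamma>)\<^sup>2"
  have aa_ap: "aa \<le> ap"
  proof -
    define t where "t = W*\<delta>/p\<^sup>2"
    have "aa = 1 + 44*t" unfolding t_def aa_def Mb_def W_def by simp
    moreover have "ap = 1 + 48*t" unfolding t_def ap_def W_def p_def by simp
    moreover have "t \<ge> 0" unfolding t_def using W_pos delta by simp
    ultimately show ?thesis by linarith
  qed
  define P where "P = ap^K' / real K'"
  define R where "R = aa^K' / real K'"
  have RP: "R \<le> P" unfolding R_def P_def using aa_ap aa_ge by (intro divide_right_mono power_mono) auto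
  have R0: "R \<ge> 0" unfolding R_def using aa_ge by simp
  define Ye where "Ye = (p + 8*W*(\<delta>+L\<^sup>2))/(W*(p - 4*l))"
  define S64 where "S64 = 64*\<sigma>sq/(p\<^sup>2*(p - 4*l))"
  have Ye0: "Ye \<ge> 0" unfolding Ye_def using p_pos W_pos delta l_lt by simp
  have rhs: "P*Ye*E0 + S64 \<le> ?RHS"
  proof -
    have d1: "1 - L * (\<gamma> + 4 * \<omega>) = p - 4*l" unfolding p_def l_def by (simp add: algebra_simps)
    have T1: "(1 + 8 * \<omega> * \<gamma> * (\<delta> + L\<^sup>2) - L * \<gamma>) * ap ^ K' * E0 / (\<omega> * \<gamma> * (1 - L * (\<gamma> + 4 * \<omega>)) * real K')
        = P*Ye*E0"
    proof -
      have "1 + 8 * \<omega> * \<gamma> * (\<delta> + L\<^sup>2) - L * \<gamma> = p + 8*W*(\<delta>+L\<^sup>2)" unfolding p_def W_def by simp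
      moreover have "\<omega> * \<gamma> * (1 - L * (\<gamma> + 4 * \<omega>)) = W*(p - 4*l)" unfolding d1 W_def ..
      ultimately show ?thesis unfolding P_def Ye_def by (simp add: mult_ac)
    qed
    have T2: "S64 \<le> 8 * (8 + (1 - L * \<gamma>)\<^sup>2 / real K' * ap ^ K') * \<sigma>sq / ((1 - L * \<gamma>)\<^sup>2 * (1 - L * (\<gamma> + 4 * \<omega>)))"
    proof -
      have d: "(1 - L * \<gamma>)\<^sup>2 * (1 - L * (\<gamma> + 4 * \<omega>)) = p\<^sup>2*(p - 4*l)" unfolding d1 p_def ..
      have t0: "(1 - L * \<gamma>)\<^sup>2 / real K' * ap ^ K' \<ge> 0" unfolding ap_def using delta w0 g0 by simp
      have "64*\<sigma>sq \<le> 8 * (8 + (1 - L * \<gamma>)\<^sup>2 / real K' * ap ^ K') * \<sigma>sq"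
      proof -
        define t where "t = (1 - L * \<gamma>)\<^sup>2 / real K' * ap ^ K'"
        have "0 \<le> t" unfolding t_def using t0 .
        then have "0 \<le> t*\<sigma>sq" using sigma by (rule mult_nonneg_nonneg)
        moreover have "8 * (8 + t) * \<sigma>sq = 64*\<sigma>sq + 8*(t*\<sigma>sq)" by (simp add: algebra_simps)
        ultimately show ?thesis unfolding t_def[symmetric] by linarith
      qed
      then show ?thesis unfolding S64_def d using p_pos l_lt by (intro divide_right_mono) auto
    qed
    show ?thesis unfolding K'_def E0_def ap_def
    proof (rule add_mono)
      show "P * Ye * (norm (x0 - xstar))\<^sup>2 \<le> (1 + 8 * \<omega> * \<gamma> * (\<delta> + L\<^sup>2) - L * \<gamma>)
               * (1 + 48 * \<omega> * \<gamma> * \<delta> / (1 - L * \<gamma>)\<^sup>2) ^ (K - 1) * (norm (x0 - xstar))\<^sup>2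
             / (\<omega> * \<gamma> * (1 - L * (\<gamma> + 4 * \<omega>)) * real (K - 1))"
        using T1 unfolding K'_def E0_def ap_def by simp
      show "S64 \<le> 8 * (8 + (1 - L * \<gamma>)\<^sup>2 / real (K - 1)
                     * (1 + 48 * \<omega> * \<gamma> * \<delta> / (1 - L * \<gamma>)\<^sup>2) ^ (K - 1)) * \<sigma>sq
             / ((1 - L * \<gamma>)\<^sup>2 * (1 - L * (\<gamma> + 4 * \<omega>)))"
        using T2 unfolding K'_def ap_def .
    qed
  qed
  show ?thesis
  proof (cases "R \<le> 1")
    case True
    have "Z / (cc * B) \<le> P*Ye*E0 + S64"
    proof -
      have split: "Z / (cc * B) = (aa * Phi0b x0 + bb) / cc / B + bb / cc"
        unfolding Z_def using cc_pos B_pos by (simp add: field_simps)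
      have "(aa * Phi0b x0 + bb) / cc / B \<le> (aa * Phi0b x0 + bb) / cc / (real K' * r^K')"
        using B_ge aa_ge Phi0b_nn bb_nn cc_pos K1 r0 B_pos
        by (intro divide_left_mono) (auto intro!: mult_pos_pos)
      also have "\<dots> = R * ((aa * Phi0b x0 + bb) / cc)"
        unfolding R_def r_def using aa_ge K1 by (simp add: field_simps power_one_over)
      also have "\<dots> = R * (aa*(1 + A*(2*L\<^sup>2+4*\<delta>))/cc) * E0 + R * ((aa*(8*A*\<sigma>sq) + bb)/cc)"
        unfolding Phi0b_def E0_def using cc_pos by (simp add: field_simps)
      also have "\<dots> \<le> P * Ye * E0 + 1 * ((aa*(8*A*\<sigma>sq) + bb)/cc)"
      proof (rule add_mono)
        show "R * (aa*(1 + A*(2*L\<^sup>2+4*\<delta>))/cc) * E0 \<le> P * Ye * E0"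
        proof (intro mult_right_mono mult_mono)
          show "0 \<le> aa * (1 + A * (2 * L\<^sup>2 + 4 * \<delta>)) / cc"
            using aa_ge A_nn delta cc_pos by simp
        qed (use RP R0 e_part E00 in \<open>auto simp: Ye_def\<close>)
        show "R * ((aa*(8*A*\<sigma>sq) + bb)/cc) \<le> 1 * ((aa*(8*A*\<sigma>sq) + bb)/cc)"
          using True aa_ge A_nn sigma bb_nn cc_pos by (intro mult_right_mono) auto
      qed
      finally have "(aa * Phi0b x0 + bb) / cc / B \<le> P * Ye * E0 + (aa*(8*A*\<sigma>sq) + bb)/cc" by simp
      moreover have "(aa*(8*A*\<sigma>sq) + bb)/cc + bb/cc = (aa*(8*A*\<sigma>sq) + 2*bb)/cc" by (simp add: add_divide_distrib)
      moreover have "(aa*(8*A*\<sigma>sq) + 2*bb)/cc \<le> S64" unfolding S64_def by (rule s_part)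
      ultimately show ?thesis unfolding split by linarith
    qed
    then have "Z / (cc * B) \<le> ?RHS" using rhs by (rule order_trans)
    from order_trans[OF m1 ennreal_leI[OF this]] show ?thesis .
  next
    case False
    have P1: "P \<ge> 1" using False RP by simp
    have t1: "Triv x0 \<le> Ye * E0 + S64" using t_part unfolding Ye_def S64_def E0_def .
    have "1 * (Ye * E0) \<le> P * (Ye * E0)" using P1 Ye0 E00 by (intro mult_right_mono) auto
    then have t2: "Ye * E0 \<le> P * Ye * E0" by (simp add: mult.assoc)
    have "Triv x0 \<le> P*Ye*E0 + S64" using t1 t2 by linarith
    then have "Triv x0 \<le> ?RHS" using rhs by (rule order_trans)
    from order_trans[OF m2 ennreal_leI[OF this]] show ?thesis .
  qed
qed

end

theorem theoremE4:
  fixes Fs :: "'n::finite \<Rightarrow> 'a::euclidean_space \<Rightarrow> 'a"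
    and D :: "(real^'n) measure"
    and xstar x0 :: 'a
    and L \<rho> \<delta> \<sigma>sq \<gamma> \<omega> :: real
    and K :: nat
  assumes Fs_meas: "\<And>i. Fs i \<in> borel_measurable borel"
    and sol: "Favg Fs xstar = 0"
    and L_pos: "L > 0"
    and lip: "\<And>x y. norm (Favg Fs x - Favg Fs y) \<le> L * norm (x - y)"
    and rho: "0 < \<rho>" "\<rho> < 1 / (2 * L)"
    and minty: "\<And>x. inner (Favg Fs x) (x - xstar) \<ge> - \<rho> * (norm (Favg Fs x))\<^sup>2"
    and D_prob: "prob_space D"
    and D_sets: "sets D = sets borel"
    and D_nonneg: "AE v in D. \<forall>i. v $ i \<ge> 0"
    and D_mean: "\<And>i. (\<integral>\<^sup>+ v. ennreal (v $ i) \<partial>D) = 1"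
    and delta: "\<delta> \<ge> 0" and sigma: "\<sigma>sq \<ge> 0"
    and var: "\<And>x. (\<integral>\<^sup>+ v. ennreal ((norm (Fv Fs v x))\<^sup>2) \<partial>D)
                 \<le> ennreal (\<delta> * (norm (x - xstar))\<^sup>2 + (norm (Favg Fs x))\<^sup>2 + 2 * \<sigma>sq)"
    and gamma: "max (2 * \<rho>) (1 / (2 * L)) < \<gamma>" "\<gamma> < 1 / L"
    and omega: "0 < \<omega>" "\<omega> < min (\<gamma> - 2 * \<rho>) (1 / (4 * L) - \<gamma> / 4)"
    and delta_le: "\<delta> \<le> (1 - L * \<gamma>) * L ^ 3 * \<omega> / 32"
    and K: "K \<ge> 2"
  shows "(MIN k\<in>{0..K-1}. \<integral>\<^sup>+ s. ennreal ((norm (Favg Fs (speg_xhat Fs \<gamma> \<omega> x0 (snth s) k)))\<^sup>2)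
              \<partial>(stream_space D))
         \<le> ennreal (
             (1 + 8 * \<omega> * \<gamma> * (\<delta> + L\<^sup>2) - L * \<gamma>)
               * (1 + 48 * \<omega> * \<gamma> * \<delta> / (1 - L * \<gamma>)\<^sup>2) ^ (K - 1) * (norm (x0 - xstar))\<^sup>2
             / (\<omega> * \<gamma> * (1 - L * (\<gamma> + 4 * \<omega>)) * real (K - 1))
           + 8 * (8 + (1 - L * \<gamma>)\<^sup>2 / real (K - 1)
                     * (1 + 48 * \<omega> * \<gamma> * \<delta> / (1 - L * \<gamma>)\<^sup>2) ^ (K - 1)) * \<sigma>sq
             / ((1 - L * \<gamma>)\<^sup>2 * (1 - L * (\<gamma> + 4 * \<omega>))))"
proof -
  interpret SP D Fs xstar L \<rho> \<delta> \<sigma>sq \<gamma> \<omega>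
    using Fs_meas sol L_pos lip minty D_prob D_sets D_nonneg D_mean delta sigma var rho gamma omega delta_le
    by (simp add: SP_def SP_axioms_def)
  show ?thesis by (rule main[OF K])
qed

end
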